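(* Let $n=1$, $\mathcal{D}=(0,1)$, let $\ell_0\ge2$ and $L>\ell_0$ be integers, and let $\eta,\beta\in H^1_{\rm per}(\mathcal{D})$ (real-valued) and $\rho\in L^2(\mathcal{D})$ (real-valued). Consider the sesquilinear form $a(u,v)=\int_0^1\big(\eta u'\overline{v'}+\beta u'\overline{v}+\rho u\overline v\big)\,dx$ and the local $a$-coherence $\mu_q=\sup_{j\in\mathcal{J}}|a(\widehat\psi_j,\widehat\xi_q)|^2$, $q\in\mathbb{Z}$, of the normalized wavelet basis $\widehat\Psi$ with respect to the normalized Fourier basis (see context). Then $$\mu_0\lesssim 2^{-2\ell_0}\big(|\beta|_{H^1(\mathcal{D})}^2+\|\rho\|_{L^2(\mathcal{D})}^2\big),$$ $$\mu_q\lesssim\Big(\|\eta\|_{H^1(\mathcal{D})}^2+\frac{\|\beta\|_{H^1(\mathcal{D})}^2}{q^2}+\|\rho\|_{L^2(\mathcal{D})}^2\Big)\min\Big\{\frac{2^L}{q^2},\frac1{|q|}\Big\},\qquad\forall q\in\mathbb{Z}\setminus\{0\},$$ where $\lesssim$ hides a constant independent of $q$, $L$ and of $\eta,\beta,\rho$.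
   Context: Functions are complex-valued, $(u,v)=\int_0^1u\bar v$, $\|u\|_{H^1}^2=\|u\|_{L^2}^2+\|u'\|_{L^2}^2$, $|u|_{H^1}=\|u'\|_{L^2}$, and $H^1_{\rm per}(\mathcal{D})$ is the closure in the $H^1$-norm of restrictions to $(0,1)$ of smooth 1-periodic functions. Wavelets: $\varphi(x)=\max\{0,1-|x|\}$ (hat function), $\psi(x)=\sum_{j=-1}^3b_j\varphi(2x-j)$ with $(b_{-1},\dots,b_3)=(\tfrac14,\tfrac12,-\tfrac32,\tfrac12,\tfrac14)$ (biorthogonal B-spline wavelets of order $(2,2)$); $\varphi_{\ell,k}(x)=2^{\ell/2}\varphi(2^\ell x-k)$, $\psi_{\ell,k}(x)=2^{\ell/2}\psi(2^\ell x-k)$, replaced by their 1-periodizations $f^{\rm per}(x)=\sum_{j\in\mathbb{Z}}f(x+j)$ on $(0,1)$. With the convention $\psi_{\ell_0-1,k}:=\varphi_{\ell_0,k}$, the trial basis is $\{\psi_{\ell,k}\}_{(\ell,k)\in\mathcal J}$ with $\mathcal{J}$ consisting of $(\ell_0-1,k)$, $k\in\{0,\dots,2^{\ell_0}-1\}$ (scaling functions) and $(\ell,k)$, $\ell_0\le\ell<L$, $k\in\{0,\dots,2^\ell-1\}$ (wavelets). Normalization: $\widehat\psi_{\ell,k}=2^{-\ell}\psi_{\ell,k}$, and $\widehat\xi_q=(1+(2\pi q)^2)^{-1/2}\xi_q$ with $\xi_q(x)=e^{2\pi iqx}$. *)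

theory Defs
  imports "HOL-Analysis.Analysis"
begin

definition Dom :: "real set" where "Dom = {0<..<1}"

definition L2 :: "(real \<Rightarrow> real) \<Rightarrow> bool" where
  "L2 u \<longleftrightarrow> set_borel_measurable lborel Dom u \<and>
             set_integrable lborel Dom (\<lambda>x. (u x)\<^sup>2)"

definition L2norm_sq :: "(real \<Rightarrow> real) \<Rightarrow> real" where
  "L2norm_sq u = set_lebesgue_integral lborel Dom (\<lambda>x. (u x)\<^sup>2)"

definition smooth_periodic :: "(real \<Rightarrow> real) \<Rightarrow> bool" where
  "smooth_periodic f \<longleftrightarrow> (\<forall>k x. ((deriv ^^ k) f) differentiable (at x))
                        \<and> (\<forall>x. f (x + 1) = f x)"

text \<open>H1per u u': u lies in the H1-closure of (restrictions to (0,1) of) smooth 1-periodic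
  functions, and u' is its weak derivative (the L2-limit of the derivatives of the
  approximating sequence).\<close>
definition H1per :: "(real \<Rightarrow> real) \<Rightarrow> (real \<Rightarrow> real) \<Rightarrow> bool" where
  "H1per u u' \<longleftrightarrow> L2 u \<and> L2 u' \<and>
     (\<exists>f :: nat \<Rightarrow> real \<Rightarrow> real. (\<forall>n. smooth_periodic (f n)) \<and>
        (\<lambda>n. L2norm_sq (\<lambda>x. f n x - u x)) \<longlonglongrightarrow> 0 \<and>
        (\<lambda>n. L2norm_sq (\<lambda>x. deriv (f n) x - u' x)) \<longlonglongrightarrow> 0)"

definition H1norm_sq :: "(real \<Rightarrow> real) \<Rightarrow> (real \<Rightarrow> real) \<Rightarrow> real" where
  "H1norm_sq u u' = L2norm_sq u + L2norm_sq u'"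

definition H1semi_sq :: "(real \<Rightarrow> real) \<Rightarrow> real" where
  "H1semi_sq u' = L2norm_sq u'"

definition hat :: "real \<Rightarrow> real" where
  "hat x = max 0 (1 - \<bar>x\<bar>)"

definition wav :: "real \<Rightarrow> real" where
  "wav x = 1/4 * hat (2*x + 1) + 1/2 * hat (2*x) - 3/2 * hat (2*x - 1)
           + 1/2 * hat (2*x - 2) + 1/4 * hat (2*x - 3)"

definition periodize :: "(real \<Rightarrow> real) \<Rightarrow> real \<Rightarrow> real" where
  "periodize f x = infsum (\<lambda>j::int. f (x + real_of_int j)) UNIV"

text \<open>psi_{l,k} with the convention psi_{l0-1,k} = phi_{l0,k} (not yet periodized).\<close>
definition psi :: "nat \<Rightarrow> nat \<times> int \<Rightarrow> real \<Rightarrow> real" where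
  "psi l0 j x = (case j of (l, k) \<Rightarrow>
     if l = l0 - 1 then 2 powr (real l0 / 2) * hat (2 ^ l0 * x - real_of_int k)
     else 2 powr (real l / 2) * wav (2 ^ l * x - real_of_int k))"

definition J :: "nat \<Rightarrow> nat \<Rightarrow> (nat \<times> int) set" where
  "J l0 L = {(l0 - 1, k) | k. 0 \<le> k \<and> k < 2 ^ l0}
          \<union> {(l, k) | l k. l0 \<le> l \<and> l < L \<and> 0 \<le> k \<and> k < 2 ^ l}"

definition psihat :: "nat \<Rightarrow> nat \<times> int \<Rightarrow> real \<Rightarrow> complex" where
  "psihat l0 j x = complex_of_real (2 powr (- real (fst j)) * periodize (psi l0 j) x)"

definition xi :: "int \<Rightarrow> real \<Rightarrow> complex" where
  "xi q x = exp (2 * of_real pi * \<i> * of_int q * of_real x)"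

definition xihat :: "int \<Rightarrow> real \<Rightarrow> complex" where
  "xihat q x = complex_of_real ((1 + (2 * pi * real_of_int q)\<^sup>2) powr (-1/2)) * xi q x"

definition aform :: "(real \<Rightarrow> real) \<Rightarrow> (real \<Rightarrow> real) \<Rightarrow> (real \<Rightarrow> real)
                    \<Rightarrow> (real \<Rightarrow> complex) \<Rightarrow> (real \<Rightarrow> complex) \<Rightarrow> complex" where
  "aform \<eta> \<beta> \<rho> u v = set_lebesgue_integral lborel Dom (\<lambda>x.
       of_real (\<eta> x) * vector_derivative u (at x) * cnj (vector_derivative v (at x))
     + of_real (\<beta> x) * vector_derivative u (at x) * cnj (v x)
     + of_real (\<rho> x) * u x * cnj (v x))"

definition coherence :: "nat \<Rightarrow> nat \<Rightarrow> (real \<Rightarrow> real) \<Rightarrow> (real \<Rightarrow> real) \<Rightarrow> (real \<Rightarrow> real)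
                         \<Rightarrow> int \<Rightarrow> real" where
  "coherence l0 L \<eta> \<beta> \<rho> q =
     Sup ((\<lambda>j. (cmod (aform \<eta> \<beta> \<rho> (psihat l0 j) (xihat q)))\<^sup>2) ` J l0 L)"

end

theory Submission
  imports Defs
begin


lemma amgm_sq_bound:
  fixes I A B :: real
  assumes A: "A \<ge> 0" and B: "B \<ge> 0" and I: "I \<ge> 0"
    and h: "\<And>t. t > 0 \<Longrightarrow> I \<le> (t * A + B / t) / 2"
  shows "I\<^sup>2 \<le> A * B"
proof (cases "A = 0 \<or> B = 0")
  case True
  have "I \<le> 0"
  proof (rule field_le_epsilon)
    fix e :: real assume e: "e > 0"
    show "I \<le> 0 + e"
    proof (cases "A = 0")
      case True
      have "I \<le> (B / ((B + 1) / e)) / 2" using h[of "(B+1)/e"] e B True by simp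
      also have "\<dots> = B * e / (2 * (B + 1))" using e B by (simp add: field_simps)
      also have "\<dots> \<le> e" using e B by (simp add: field_simps)
      finally show ?thesis by simp
    next
      case False
      with \<open>A = 0 \<or> B = 0\<close> have B0: "B = 0" by simp
      have "I \<le> ((e / (A + 1)) * A) / 2" using h[of "e/(A+1)"] e A B0 by simp
      also have "\<dots> = A * e / (2 * (A + 1))" using e A by (simp add: field_simps)
      also have "\<dots> \<le> e" using e A by (simp add: field_simps)
      finally show ?thesis by simp
    qed
  qed
  with I have "I = 0" by simp
  then show ?thesis using A B by simp
next
  case False
  with A B have A': "A > 0" and B': "B > 0" by auto
  define t where "t = sqrt (B / A)"
  have t: "t > 0" using A' B' by (simp add: t_def)
  have tA: "t * A = sqrt (A * B)"
    using A' B' by (simp add: t_def real_sqrt_divide real_sqrt_mult field_simps)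
  have tB: "B / t = sqrt (A * B)"
    using A' B' by (simp add: t_def real_sqrt_divide real_sqrt_mult field_simps)
  have "I \<le> sqrt (A * B)" using h[OF t] tA tB by simp
  then have "I\<^sup>2 \<le> (sqrt (A * B))\<^sup>2" using I by (simp add: power_mono)
  then show ?thesis using A B by simp
qed

lemma Dom_sets [measurable]: "Dom \<in> sets lborel"
  by (simp add: Dom_def)

lemma Dom_sub: "Dom \<subseteq> {0..1}" by (auto simp: Dom_def)

lemma cont_set_integrable_Dom:
  fixes f :: "real \<Rightarrow> 'a::{banach, second_countable_topology}"
  assumes "continuous_on {0..1} f"
  shows "set_integrable lborel Dom f"
  using set_integrable_subset[OF borel_integrable_atLeastAtMost'[OF assms] Dom_sets Dom_sub] .

lemma const_set_integrable_Dom: "set_integrable lborel Dom (\<lambda>_. c :: 'a::{banach, second_countable_topology})"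
  by (rule cont_set_integrable_Dom) simp

lemma cont_set_borel_measurable_Dom:
  fixes f :: "real \<Rightarrow> 'a::real_normed_vector"
  assumes "continuous_on {0..1} f"
  shows "set_borel_measurable lborel Dom f"
proof -
  have "continuous_on Dom f" using assms continuous_on_subset Dom_sub by blast
  then have "set_borel_measurable borel Dom f"
    by (intro set_measurable_continuous_on) (auto simp: Dom_def)
  then show ?thesis by (simp add: set_borel_measurable_def)
qed

lemma cont_L2:
  assumes "continuous_on {0..1} f"
  shows "L2 f"
  unfolding L2_def
  using assms by (auto intro!: cont_set_borel_measurable_Dom cont_set_integrable_Dom continuous_intros)

lemma L2_integrable:
  assumes "L2 u" shows "set_integrable lborel Dom u"
proof (rule set_integrable_bound[where f = "\<lambda>x. 1 + (u x)\<^sup>2"])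
  show "set_integrable lborel Dom (\<lambda>x. 1 + (u x)\<^sup>2)"
    using assms const_set_integrable_Dom[of "1::real"] unfolding L2_def
    by (intro set_integral_add) auto
  show "set_borel_measurable lborel Dom u" using assms by (simp add: L2_def)
  show "AE x in lborel. x \<in> Dom \<longrightarrow> norm (u x) \<le> norm (1 + (u x)\<^sup>2)"
  proof (intro AE_I2 impI)
    fix x
    have "0 \<le> (\<bar>u x\<bar> - 1)\<^sup>2" by simp
    then have "\<bar>u x\<bar> \<le> 1 + (u x)\<^sup>2"
      by (simp add: power2_eq_square algebra_simps abs_mult_self)
    then show "norm (u x) \<le> norm (1 + (u x)\<^sup>2)" by simp
  qed
qed

lemma set_borel_measurable_mult:
  fixes u :: "real \<Rightarrow> 'a::{real_normed_field, second_countable_topology}"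
  assumes "set_borel_measurable lborel Dom u" "set_borel_measurable lborel Dom v"
  shows "set_borel_measurable lborel Dom (\<lambda>x. u x * v x)"
proof -
  have "(\<lambda>x. indicator Dom x *\<^sub>R (u x * v x)) = (\<lambda>x. (indicator Dom x *\<^sub>R u x) * (indicator Dom x *\<^sub>R v x))"
    by (auto simp: indicator_def)
  moreover have "(\<lambda>x. (indicator Dom x *\<^sub>R u x) * (indicator Dom x *\<^sub>R v x)) \<in> borel_measurable lborel"
    using assms unfolding set_borel_measurable_def by (rule borel_measurable_times)
  ultimately show ?thesis unfolding set_borel_measurable_def by simp
qed

lemma set_borel_measurable_diff:
  fixes u :: "real \<Rightarrow> 'a::{real_normed_vector, second_countable_topology}"
  assumes "set_borel_measurable lborel Dom u" "set_borel_measurable lborel Dom v"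
  shows "set_borel_measurable lborel Dom (\<lambda>x. u x - v x)"
proof -
  have "(\<lambda>x. indicator Dom x *\<^sub>R (u x - v x)) = (\<lambda>x. (indicator Dom x *\<^sub>R u x) - (indicator Dom x *\<^sub>R v x))"
    by (auto simp: indicator_def)
  moreover have "(\<lambda>x. (indicator Dom x *\<^sub>R u x) - (indicator Dom x *\<^sub>R v x)) \<in> borel_measurable lborel"
    using assms unfolding set_borel_measurable_def by (rule borel_measurable_diff)
  ultimately show ?thesis unfolding set_borel_measurable_def by simp
qed

lemma set_borel_measurable_comp:
  fixes u :: "real \<Rightarrow> 'a::real_normed_vector" and g :: "'a \<Rightarrow> 'b::real_normed_vector"
  assumes "set_borel_measurable lborel Dom u" "g \<in> borel_measurable borel" "g 0 = 0"
  shows "set_borel_measurable lborel Dom (\<lambda>x. g (u x))"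
proof -
  have "(\<lambda>x. indicator Dom x *\<^sub>R g (u x)) = (\<lambda>x. g (indicator Dom x *\<^sub>R u x))"
    using assms(3) by (intro ext) (simp split: split_indicator)
  then show ?thesis using assms unfolding set_borel_measurable_def
    by (simp add: measurable_compose[OF _ assms(2)])
qed

lemma CS_Dom:
  assumes "L2 u" "L2 v"
  shows "set_integrable lborel Dom (\<lambda>x. \<bar>u x * v x\<bar>)"
    and "(LINT x:Dom|lborel. \<bar>u x * v x\<bar>)\<^sup>2 \<le> L2norm_sq u * L2norm_sq v"
proof -
  have mu: "set_borel_measurable lborel Dom u" and mv: "set_borel_measurable lborel Dom v"
    and iu: "set_integrable lborel Dom (\<lambda>x. (u x)\<^sup>2)" and iv: "set_integrable lborel Dom (\<lambda>x. (v x)\<^sup>2)"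
    using assms by (auto simp: L2_def)
  have muv: "set_borel_measurable lborel Dom (\<lambda>x. \<bar>u x * v x\<bar>)"
    using set_borel_measurable_comp[OF set_borel_measurable_mult[OF mu mv], of abs] by simp
  have pw: "\<bar>u x * v x\<bar> \<le> (t * (u x)\<^sup>2 + (v x)\<^sup>2 / t) / 2" if t: "t > 0" for t x
  proof -
    have "0 \<le> (t * \<bar>u x\<bar> - \<bar>v x\<bar>)\<^sup>2" by simp
    then have "2 * t * \<bar>u x * v x\<bar> \<le> t\<^sup>2 * (u x)\<^sup>2 + (v x)\<^sup>2"
      by (simp add: power2_eq_square abs_mult algebra_simps)
    then show ?thesis using t by (simp add: field_simps power2_eq_square)
  qed
  show int: "set_integrable lborel Dom (\<lambda>x. \<bar>u x * v x\<bar>)"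
  proof (rule set_integrable_bound[OF _ muv])
    show "set_integrable lborel Dom (\<lambda>x. ((u x)\<^sup>2 + (v x)\<^sup>2) / 2)"
      using iu iv by (intro set_integrable_divide set_integral_add)
    show "AE x in lborel. x \<in> Dom \<longrightarrow> norm \<bar>u x * v x\<bar> \<le> norm (((u x)\<^sup>2 + (v x)\<^sup>2) / 2)"
      using pw[of 1] by (intro AE_I2) simp
  qed
  show "(LINT x:Dom|lborel. \<bar>u x * v x\<bar>)\<^sup>2 \<le> L2norm_sq u * L2norm_sq v"
    unfolding L2norm_sq_def
  proof (rule amgm_sq_bound)
    show "0 \<le> (LINT x:Dom|lborel. (u x)\<^sup>2)" "0 \<le> (LINT x:Dom|lborel. (v x)\<^sup>2)"
      "0 \<le> (LINT x:Dom|lborel. \<bar>u x * v x\<bar>)"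
      by (auto simp: set_lebesgue_integral_def intro!: integral_nonneg_AE)
    fix t :: real assume t: "t > 0"
    have "(LINT x:Dom|lborel. \<bar>u x * v x\<bar>) \<le> (LINT x:Dom|lborel. (t * (u x)\<^sup>2 + (v x)\<^sup>2 / t) / 2)"
      using iu iv int pw[OF t] by (intro set_integral_mono) auto
    also have "\<dots> = (t * (LINT x:Dom|lborel. (u x)\<^sup>2) + (LINT x:Dom|lborel. (v x)\<^sup>2) / t) / 2"
      using iu iv by (simp add: set_integral_add set_integral_divide_zero)
    finally show "(LINT x:Dom|lborel. \<bar>u x * v x\<bar>) \<le> (t * (LINT x:Dom|lborel. (u x)\<^sup>2) + (LINT x:Dom|lborel. (v x)\<^sup>2) / t) / 2" .
  qed
qed

lemma L2_diff:
  assumes "L2 u" "L2 v" shows "L2 (\<lambda>x. u x - v x)"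
  unfolding L2_def
proof
  show m: "set_borel_measurable lborel Dom (\<lambda>x. u x - v x)"
    using assms by (intro set_borel_measurable_diff) (auto simp: L2_def)
  show "set_integrable lborel Dom (\<lambda>x. (u x - v x)\<^sup>2)"
  proof (rule set_integrable_bound[where f="\<lambda>x. 2 * (u x)\<^sup>2 + 2 * (v x)\<^sup>2"])
    show "set_integrable lborel Dom (\<lambda>x. 2 * (u x)\<^sup>2 + 2 * (v x)\<^sup>2)"
      using assms by (intro set_integral_add set_integrable_mult_right) (auto simp: L2_def)
    show "set_borel_measurable lborel Dom (\<lambda>x. (u x - v x)\<^sup>2)"
      using set_borel_measurable_comp[OF m, of "\<lambda>y. y\<^sup>2"] by simp
    show "AE x in lborel. x \<in> Dom \<longrightarrow> norm ((u x - v x)\<^sup>2) \<le> norm (2 * (u x)\<^sup>2 + 2 * (v x)\<^sup>2)"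
    proof (intro AE_I2 impI)
      fix x
      have "0 \<le> (u x + v x)\<^sup>2" by simp
      then have "(u x - v x)\<^sup>2 \<le> 2 * (u x)\<^sup>2 + 2 * (v x)\<^sup>2"
        by (simp add: power2_eq_square algebra_simps)
      then show "norm ((u x - v x)\<^sup>2) \<le> norm (2 * (u x)\<^sup>2 + 2 * (v x)\<^sup>2)"
        by simp
    qed
  qed
qed

lemma L2norm_sq_nonneg: "L2norm_sq u \<ge> 0"
  by (auto simp: L2norm_sq_def set_lebesgue_integral_def intro!: integral_nonneg_AE)

lemma L2norm_sq_le:
  assumes "L2 u" "L2 v"
  shows "L2norm_sq u \<le> 2 * L2norm_sq v + 2 * L2norm_sq (\<lambda>x. u x - v x)"
proof -
  have d: "L2 (\<lambda>x. u x - v x)" using assms by (rule L2_diff)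
  have "L2norm_sq u \<le> (LINT x:Dom|lborel. 2 * (v x)\<^sup>2 + 2 * (u x - v x)\<^sup>2)"
    unfolding L2norm_sq_def
  proof (rule set_integral_mono)
    show "set_integrable lborel Dom (\<lambda>x. (u x)\<^sup>2)" using assms by (simp add: L2_def)
    show "set_integrable lborel Dom (\<lambda>x. 2 * (v x)\<^sup>2 + 2 * (u x - v x)\<^sup>2)"
      using assms d by (intro set_integral_add set_integrable_mult_right) (auto simp: L2_def)
    fix x
    have "0 \<le> (u x - 2 * v x)\<^sup>2" by simp
    then show "(u x)\<^sup>2 \<le> 2 * (v x)\<^sup>2 + 2 * (u x - v x)\<^sup>2"
      by (simp add: power2_eq_square algebra_simps)
  qed
  also have "\<dots> = 2 * L2norm_sq v + 2 * L2norm_sq (\<lambda>x. u x - v x)"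
    using assms d unfolding L2norm_sq_def L2_def by (simp add: set_integral_add)
  finally show ?thesis .
qed

lemma measure_Dom: "measure lborel Dom = 1" by (simp add: Dom_def)

lemma L1_le_L2:
  assumes "L2 u"
  shows "set_integrable lborel Dom (\<lambda>x. \<bar>u x\<bar>)" "(LINT x:Dom|lborel. \<bar>u x\<bar>)\<^sup>2 \<le> L2norm_sq u"
proof -
  have one: "L2 (\<lambda>_. 1)" by (rule cont_L2) simp
  have n1: "L2norm_sq (\<lambda>_. 1) = 1"
    unfolding L2norm_sq_def by (subst set_integral_const) (auto simp: Dom_def)
  show "set_integrable lborel Dom (\<lambda>x. \<bar>u x\<bar>)" using CS_Dom(1)[OF assms one] by simp
  show "(LINT x:Dom|lborel. \<bar>u x\<bar>)\<^sup>2 \<le> L2norm_sq u" using CS_Dom(2)[OF assms one] n1 by simp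
qed

lemma kernel_integrable:
  fixes W :: "real \<Rightarrow> complex"
  assumes u: "L2 u" and W: "W \<in> borel_measurable lborel" and B: "\<And>x. x \<in> Dom \<Longrightarrow> cmod (W x) \<le> B"
  shows "set_integrable lborel Dom (\<lambda>x. complex_of_real (u x) * W x)"
    and "cmod (LINT x:Dom|lborel. complex_of_real (u x) * W x) \<le> B * (LINT x:Dom|lborel. \<bar>u x\<bar>)"
proof -
  have mu: "set_borel_measurable lborel Dom u" using u by (simp add: L2_def)
  have mu': "set_borel_measurable lborel Dom (\<lambda>x. complex_of_real (u x))"
    using set_borel_measurable_comp[OF mu, of complex_of_real] by simp
  have mW: "set_borel_measurable lborel Dom W" using W unfolding set_borel_measurable_def by simp
  have m: "set_borel_measurable lborel Dom (\<lambda>x. complex_of_real (u x) * W x)"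
    by (rule set_borel_measurable_mult[OF mu' mW])
  have iu: "set_integrable lborel Dom (\<lambda>x. \<bar>u x\<bar>)" using L1_le_L2(1)[OF u] .
  have B0: "B \<ge> 0" using B[of "1/2"] by (auto simp: Dom_def intro: order_trans[OF norm_ge_zero])
  have nb: "cmod (complex_of_real (u x) * W x) \<le> B * \<bar>u x\<bar>" if "x \<in> Dom" for x
    using mult_left_mono[OF B[OF that], of "\<bar>u x\<bar>"] by (simp add: norm_mult mult.commute)
  show i: "set_integrable lborel Dom (\<lambda>x. complex_of_real (u x) * W x)"
  proof (rule set_integrable_bound[OF _ m])
    show "set_integrable lborel Dom (\<lambda>x. B * \<bar>u x\<bar>)" using iu by simp
    show "AE x in lborel. x \<in> Dom \<longrightarrow> cmod (complex_of_real (u x) * W x) \<le> norm (B * \<bar>u x\<bar>)"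
      using nb B0 by (intro AE_I2 impI) (auto intro: order_trans)
  qed
  have "cmod (LINT x:Dom|lborel. complex_of_real (u x) * W x) \<le> (LINT x:Dom|lborel. cmod (complex_of_real (u x) * W x))"
    using i by (rule set_integral_norm_bound)
  also have "\<dots> \<le> (LINT x:Dom|lborel. B * \<bar>u x\<bar>)"
    using i iu nb by (intro set_integral_mono) (auto intro: set_integrable_norm)
  also have "\<dots> = B * (LINT x:Dom|lborel. \<bar>u x\<bar>)" by simp
  finally show "cmod (LINT x:Dom|lborel. complex_of_real (u x) * W x) \<le> B * (LINT x:Dom|lborel. \<bar>u x\<bar>)" .
qed

lemma sp_diff: "smooth_periodic f \<Longrightarrow> f differentiable (at x)"
proof -
  assume "smooth_periodic f"
  then have "((deriv ^^ 0) f) differentiable (at x)" unfolding smooth_periodic_def by blast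
  then show ?thesis by simp
qed

lemma sp_deriv_diff: "smooth_periodic f \<Longrightarrow> (deriv f) differentiable (at x)"
proof -
  assume "smooth_periodic f"
  then have "((deriv ^^ Suc 0) f) differentiable (at x)" unfolding smooth_periodic_def by blast
  then show ?thesis by simp
qed

lemma sp_cont: "smooth_periodic f \<Longrightarrow> continuous_on S f"
  by (meson continuous_at_imp_continuous_on differentiable_imp_continuous_within sp_diff)

lemma sp_deriv_cont: "smooth_periodic f \<Longrightarrow> continuous_on S (deriv f)"
  by (meson continuous_at_imp_continuous_on differentiable_imp_continuous_within sp_deriv_diff)

lemma sp_has_deriv: "smooth_periodic f \<Longrightarrow> (f has_real_derivative deriv f x) (at x)"
  using sp_diff DERIV_deriv_iff_real_differentiable by blast

lemma sp_per: "smooth_periodic f \<Longrightarrow> f (x + 1) = f x"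
  unfolding smooth_periodic_def by blast

lemma H1_limit:
  fixes W :: "real \<Rightarrow> complex"
  assumes H: "H1per \<eta> \<eta>'" and W: "W \<in> borel_measurable lborel" and B: "\<And>x. x \<in> Dom \<Longrightarrow> cmod (W x) \<le> B"
    and K1: "K1 \<ge> 0" and K2: "K2 \<ge> 0"
    and sm: "\<And>f. smooth_periodic f \<Longrightarrow>
       (cmod (LINT x:Dom|lborel. complex_of_real (f x) * W x))\<^sup>2 \<le> K1 * L2norm_sq f + K2 * L2norm_sq (deriv f)"
  shows "(cmod (LINT x:Dom|lborel. complex_of_real (\<eta> x) * W x))\<^sup>2 \<le> 2 * K1 * L2norm_sq \<eta> + 2 * K2 * L2norm_sq \<eta>'"
proof -
  from H obtain f where f: "\<And>n. smooth_periodic (f n)" and L2e: "L2 \<eta>" and L2e': "L2 \<eta>'"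
    and c1: "(\<lambda>n. L2norm_sq (\<lambda>x. f n x - \<eta> x)) \<longlonglongrightarrow> 0"
    and c2: "(\<lambda>n. L2norm_sq (\<lambda>x. deriv (f n) x - \<eta>' x)) \<longlonglongrightarrow> 0"
    unfolding H1per_def by blast
  have L2f: "L2 (f n)" for n using sp_cont[OF f] by (intro cont_L2)
  have L2f': "L2 (deriv (f n))" for n using sp_deriv_cont[OF f] by (intro cont_L2)
  define a where "a n = (LINT x:Dom|lborel. complex_of_real (f n x) * W x)" for n
  define A where "A = (LINT x:Dom|lborel. complex_of_real (\<eta> x) * W x)"
  have B0: "B \<ge> 0" using B[of "1/2"] by (auto simp: Dom_def intro: order_trans[OF norm_ge_zero])
  have dist: "cmod (a n - A) \<le> B * sqrt (L2norm_sq (\<lambda>x. f n x - \<eta> x))" for n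
  proof -
    have d: "L2 (\<lambda>x. f n x - \<eta> x)" using L2f L2e by (rule L2_diff)
    have "a n - A = (LINT x:Dom|lborel. complex_of_real (f n x) * W x - complex_of_real (\<eta> x) * W x)"
      unfolding a_def A_def
      using kernel_integrable(1)[OF L2f W B] kernel_integrable(1)[OF L2e W B]
      by (simp add: set_integral_diff)
    also have "\<dots> = (LINT x:Dom|lborel. complex_of_real (f n x - \<eta> x) * W x)"
      by (simp add: algebra_simps)
    finally have "cmod (a n - A) \<le> B * (LINT x:Dom|lborel. \<bar>f n x - \<eta> x\<bar>)"
      using kernel_integrable(2)[OF d W B] by simp
    also have "(LINT x:Dom|lborel. \<bar>f n x - \<eta> x\<bar>) \<le> sqrt (L2norm_sq (\<lambda>x. f n x - \<eta> x))"
      using L1_le_L2(2)[OF d] by (simp add: real_le_rsqrt)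
    finally show ?thesis using B0 by (simp add: mult_left_mono)
  qed
  have "(\<lambda>n. B * sqrt (L2norm_sq (\<lambda>x. f n x - \<eta> x))) \<longlonglongrightarrow> B * sqrt 0"
    by (intro tendsto_intros c1)
  then have g0: "(\<lambda>n. B * sqrt (L2norm_sq (\<lambda>x. f n x - \<eta> x))) \<longlonglongrightarrow> 0" by simp
  have ev: "eventually (\<lambda>n. norm (a n - A) \<le> B * sqrt (L2norm_sq (\<lambda>x. f n x - \<eta> x))) sequentially"
    using dist by (intro always_eventually allI) simp
  have "(\<lambda>n. a n - A) \<longlonglongrightarrow> 0"
    by (rule Lim_null_comparison[OF ev g0])
  then have aA: "a \<longlonglongrightarrow> A" by (simp add: LIM_zero_iff)
  have l1: "(\<lambda>n. (cmod (a n))\<^sup>2) \<longlonglongrightarrow> (cmod A)\<^sup>2" by (intro tendsto_intros aA)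
  have l2: "(\<lambda>n. K1 * (2 * L2norm_sq \<eta> + 2 * L2norm_sq (\<lambda>x. f n x - \<eta> x))
               + K2 * (2 * L2norm_sq \<eta>' + 2 * L2norm_sq (\<lambda>x. deriv (f n) x - \<eta>' x)))
         \<longlonglongrightarrow> K1 * (2 * L2norm_sq \<eta> + 2 * 0) + K2 * (2 * L2norm_sq \<eta>' + 2 * 0)"
    by (intro tendsto_intros c1 c2)
  have le: "(cmod (a n))\<^sup>2 \<le> K1 * (2 * L2norm_sq \<eta> + 2 * L2norm_sq (\<lambda>x. f n x - \<eta> x))
               + K2 * (2 * L2norm_sq \<eta>' + 2 * L2norm_sq (\<lambda>x. deriv (f n) x - \<eta>' x))" for n
  proof -
    have "(cmod (a n))\<^sup>2 \<le> K1 * L2norm_sq (f n) + K2 * L2norm_sq (deriv (f n))"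
      unfolding a_def by (rule sm[OF f])
    also have "\<dots> \<le> K1 * (2 * L2norm_sq \<eta> + 2 * L2norm_sq (\<lambda>x. f n x - \<eta> x))
               + K2 * (2 * L2norm_sq \<eta>' + 2 * L2norm_sq (\<lambda>x. deriv (f n) x - \<eta>' x))"
    proof (rule add_mono)
      show "K1 * L2norm_sq (f n) \<le> K1 * (2 * L2norm_sq \<eta> + 2 * L2norm_sq (\<lambda>x. f n x - \<eta> x))"
        using L2norm_sq_le[OF L2f L2e, of n] K1 by (intro mult_left_mono) simp_all
      show "K2 * L2norm_sq (deriv (f n)) \<le> K2 * (2 * L2norm_sq \<eta>' + 2 * L2norm_sq (\<lambda>x. deriv (f n) x - \<eta>' x))"
        using L2norm_sq_le[OF L2f' L2e', of n] K2 by (intro mult_left_mono) simp_all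
    qed
    finally show ?thesis .
  qed
  have "(cmod A)\<^sup>2 \<le> K1 * (2 * L2norm_sq \<eta> + 2 * 0) + K2 * (2 * L2norm_sq \<eta>' + 2 * 0)"
    by (rule LIMSEQ_le[OF l1 l2]) (use le in blast)
  then show ?thesis unfolding A_def by (simp add: algebra_simps)
qed

definition EE :: "complex \<Rightarrow> real \<Rightarrow> complex" where "EE c x = exp (c * complex_of_real x)"

lemma EE_deriv: "((EE c) has_vector_derivative (c * EE c x)) (at x within S)"
proof -
  have "((\<lambda>z. exp (c * z)) has_field_derivative (exp (c * of_real x) * c)) (at (of_real x))"
    by (auto intro!: derivative_eq_intros)
  from has_vector_derivative_real_field[OF this] show ?thesis
    unfolding EE_def by (simp add: mult.commute)
qed

lemma EE_cont [continuous_intros]: "continuous_on S (EE c)"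
  unfolding EE_def by (intro continuous_intros)

lemma norm_EE: "Re c = 0 \<Longrightarrow> cmod (EE c x) = 1"
  unfolding EE_def by (simp add: norm_exp_eq_Re)

lemma int_bound_parts:
  assumes sp: "smooth_periodic f" and c: "c \<noteq> 0" "Re c = 0" and uv: "0 \<le> u" "u \<le> v" "v \<le> 1"
    and Sf: "\<And>x. x \<in> {0..1} \<Longrightarrow> \<bar>f x\<bar> \<le> Sf"
  shows "cmod (integral {u..v} (\<lambda>x. complex_of_real (f x) * EE c x))
          \<le> (2 * Sf + integral {0..1} (\<lambda>x. \<bar>deriv f x\<bar>)) / cmod c"
proof -
  define F where "F x = complex_of_real (f x) * EE c x / c" for x
  define g1 where "g1 x = complex_of_real (deriv f x) * EE c x / c" for x
  define g2 where "g2 x = complex_of_real (f x) * EE c x" for x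
  have cf: "continuous_on S f" for S using sp by (rule sp_cont)
  have cf': "continuous_on S (deriv f)" for S using sp by (rule sp_deriv_cont)
  have der: "(F has_vector_derivative (g1 x + g2 x)) (at x within {u..v})" for x
  proof -
    have "((\<lambda>x. complex_of_real (f x)) has_vector_derivative complex_of_real (deriv f x)) (at x within {u..v})"
      using sp_has_deriv[OF sp, of x] by (intro has_vector_derivative_of_real) (rule DERIV_subset, auto)
    from has_vector_derivative_mult[OF this EE_deriv]
    have "((\<lambda>x. complex_of_real (f x) * EE c x) has_vector_derivative
           (complex_of_real (f x) * (c * EE c x) + complex_of_real (deriv f x) * EE c x)) (at x within {u..v})" .
    from has_vector_derivative_divide[OF this, of c]
    show ?thesis unfolding F_def g1_def g2_def using c by (simp add: field_simps)
  qed
  have ftc: "((\<lambda>x. g1 x + g2 x) has_integral (F v - F u)) {u..v}"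
    using uv by (intro fundamental_theorem_of_calculus) (auto intro: der)
  have i1: "g1 integrable_on {u..v}" unfolding g1_def
    using c by (intro integrable_continuous_interval continuous_intros cf' continuous_on_of_real_id continuous_on_compose2[OF continuous_on_of_real_id cf'] ) auto
  have i2: "g2 integrable_on {u..v}" unfolding g2_def
    by (intro integrable_continuous_interval continuous_intros continuous_on_compose2[OF continuous_on_of_real_id cf]) auto
  have eq: "integral {u..v} g2 = (F v - F u) - integral {u..v} g1"
    using integral_add[OF i1 i2] ftc[THEN integral_unique] by (simp add: algebra_simps)
  have nF: "cmod (F x) \<le> Sf / cmod c" if "x \<in> {0..1}" for x
    using Sf[OF that] c unfolding F_def by (simp add: norm_mult norm_divide norm_EE divide_right_mono)
  have "cmod (F v - F u) \<le> cmod (F v) + cmod (F u)" by (rule norm_triangle_ineq4)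
  also have "\<dots> \<le> 2 * Sf / cmod c" using nF[of u] nF[of v] uv by simp
  finally have b1: "cmod (F v - F u) \<le> 2 * Sf / cmod c" .
  have ia: "(\<lambda>x. \<bar>deriv f x\<bar>) integrable_on S" if "S = {u..v} \<or> S = {0..1}" for S
    using that by (auto intro!: integrable_continuous_interval continuous_intros cf')
  have "cmod (integral {u..v} g1) \<le> integral {u..v} (\<lambda>x. \<bar>deriv f x\<bar> / cmod c)"
    using i1 ia by (intro integral_norm_bound_integral) (auto simp: g1_def norm_mult norm_divide norm_EE c intro!: integrable_on_divide)
  also have "\<dots> = integral {u..v} (\<lambda>x. \<bar>deriv f x\<bar>) / cmod c" by simp
  also have "\<dots> \<le> integral {0..1} (\<lambda>x. \<bar>deriv f x\<bar>) / cmod c"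
    using uv ia by (intro divide_right_mono integral_subset_le) auto
  finally have b2: "cmod (integral {u..v} g1) \<le> integral {0..1} (\<lambda>x. \<bar>deriv f x\<bar>) / cmod c" .
  have "cmod (integral {u..v} g2) \<le> cmod (F v - F u) + cmod (integral {u..v} g1)"
    unfolding eq by (rule norm_triangle_ineq4)
  also have "\<dots> \<le> 2 * Sf / cmod c + integral {0..1} (\<lambda>x. \<bar>deriv f x\<bar>) / cmod c"
    using b1 b2 by simp
  finally show ?thesis unfolding g2_def by (simp add: add_divide_distrib)
qed

lemma ftc_diff_bound:
  assumes sp: "smooth_periodic f" and ab: "0 \<le> a" "a \<le> b" "b \<le> 1"
  shows "\<bar>f b - f a\<bar> \<le> integral {0..1} (\<lambda>y. \<bar>deriv f y\<bar>)"
proof -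
  have cf': "continuous_on S (deriv f)" for S using sp by (rule sp_deriv_cont)
  have "(deriv f has_integral (f b - f a)) {a..b}"
    using ab sp_has_deriv[OF sp]
    by (intro fundamental_theorem_of_calculus)
       (auto simp: has_real_derivative_iff_has_vector_derivative[symmetric] intro: DERIV_subset)
  then have e: "f b - f a = integral {a..b} (deriv f)" by (simp add: integral_unique)
  have ia: "(\<lambda>x. \<bar>deriv f x\<bar>) integrable_on S" if "S = {a..b} \<or> S = {0..1}" for S
    using that by (auto intro!: integrable_continuous_interval continuous_intros cf')
  have "\<bar>integral {a..b} (deriv f)\<bar> \<le> integral {a..b} (\<lambda>y. \<bar>deriv f y\<bar>)"
    using integral_norm_bound_integral[of "deriv f" "{a..b}" "\<lambda>y. \<bar>deriv f y\<bar>"] ia[of "{a..b}"]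
      integrable_continuous_interval[OF cf'] by simp
  also have "\<dots> \<le> integral {0..1} (\<lambda>y. \<bar>deriv f y\<bar>)"
    using ab ia by (intro integral_subset_le) auto
  finally show ?thesis using e by simp
qed

lemma sup_bound:
  assumes sp: "smooth_periodic f" and x: "x \<in> {0..1}"
  shows "\<bar>f x\<bar> \<le> integral {0..1} (\<lambda>y. \<bar>f y\<bar>) + integral {0..1} (\<lambda>y. \<bar>deriv f y\<bar>)"
proof -
  define V where "V = integral {0..1} (\<lambda>y. \<bar>deriv f y\<bar>)"
  have cf: "continuous_on S f" for S using sp by (rule sp_cont)
  have pt: "\<bar>f x\<bar> \<le> \<bar>f y\<bar> + V" if y: "y \<in> {0..1}" for y
  proof (cases "y \<le> x")
    case True
    then have "\<bar>f x - f y\<bar> \<le> V" unfolding V_def using x y by (intro ftc_diff_bound[OF sp]) auto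
    then show ?thesis by linarith
  next
    case False
    then have "\<bar>f y - f x\<bar> \<le> V" unfolding V_def using x y by (intro ftc_diff_bound[OF sp]) auto
    then show ?thesis by linarith
  qed
  have "\<bar>f x\<bar> = integral {0..1} (\<lambda>y::real. \<bar>f x\<bar>)" by simp
  also have "\<dots> \<le> integral {0..1} (\<lambda>y. \<bar>f y\<bar> + V)"
    using pt by (intro integral_le integrable_continuous_interval continuous_intros cf) auto
  also have "\<dots> = integral {0..1} (\<lambda>y. \<bar>f y\<bar>) + V"
    by (subst integral_add) (auto intro!: integrable_continuous_interval continuous_intros cf)
  finally show ?thesis unfolding V_def .
qed

lemma LINT_eq_HK:
  fixes g :: "real \<Rightarrow> 'a::euclidean_space"
  assumes "continuous_on {0..1} g"
  shows "(LINT x:Dom|lborel. g x) = integral {0..1} g"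
  using set_borel_integral_eq_integral(2)[OF cont_set_integrable_Dom[OF assms]]
  by (simp add: Dom_def integral_open_interval_real)

lemma piece_has_integral:
  fixes g :: "real \<Rightarrow> complex"
  assumes g: "continuous_on {0..1} g"
  shows "((\<lambda>x. complex_of_real (indicator {\<alpha><..<\<beta>} x) * g x) has_integral
           integral {max \<alpha> 0..min \<beta> 1} g) {0..1}"
proof -
  let ?u = "max \<alpha> 0" and ?v = "min \<beta> 1"
  have "g integrable_on {?u..?v}"
    by (rule integrable_continuous_interval, rule continuous_on_subset[OF g]) auto
  then have h1: "(g has_integral integral {?u..?v} g) {?u..?v}" by (rule integrable_integral)
  have "negligible {\<alpha>, \<beta>}" by simp
  then have h2: "(g has_integral integral {?u..?v} g) ({\<alpha><..<\<beta>} \<inter> {0..1})"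
    by (rule has_integral_spike_set_eq[THEN iffD1, OF negligible_subset negligible_subset h1]) auto
  have "((\<lambda>x. if x \<in> {\<alpha><..<\<beta>} then g x else 0) has_integral integral {?u..?v} g) {0..1}"
    using h2 by (subst has_integral_restrict_Int)
  then show ?thesis
    by (rule has_integral_eq[rotated]) (auto simp: indicator_def)
qed

lemma piece_bound:
  fixes f :: "real \<Rightarrow> real"
  assumes sp: "smooth_periodic f" and c: "c \<noteq> 0" "Re c = 0" and ab: "\<alpha> \<le> \<beta>"
    and Sf: "\<And>x. x \<in> {0..1} \<Longrightarrow> \<bar>f x\<bar> \<le> Sf"
  shows "cmod (integral {max \<alpha> 0..min \<beta> 1} (\<lambda>x. complex_of_real (f x) * EE c x))
          \<le> (2 * Sf + integral {0..1} (\<lambda>x. \<bar>deriv f x\<bar>)) / cmod c"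
    and "cmod (integral {max \<alpha> 0..min \<beta> 1} (\<lambda>x. complex_of_real (f x) * EE c x)) \<le> (\<beta> - \<alpha>) * Sf"
proof -
  let ?u = "max \<alpha> 0" and ?v = "min \<beta> 1"
  have Sf0: "Sf \<ge> 0" using Sf[of 0] by simp
  have V0: "integral {0..1} (\<lambda>x. \<bar>deriv f x\<bar>) \<ge> 0"
    by (rule integral_nonneg) (auto intro!: integrable_continuous_interval continuous_intros sp_deriv_cont[OF sp])
  have "cmod (integral {?u..?v} (\<lambda>x. complex_of_real (f x) * EE c x))
          \<le> (2 * Sf + integral {0..1} (\<lambda>x. \<bar>deriv f x\<bar>)) / cmod c
      \<and> cmod (integral {?u..?v} (\<lambda>x. complex_of_real (f x) * EE c x)) \<le> (\<beta> - \<alpha>) * Sf"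
  proof (cases "?u \<le> ?v")
    case False
    then show ?thesis using Sf0 V0 ab by auto
  next
    case True
    have b1: "cmod (integral {?u..?v} (\<lambda>x. complex_of_real (f x) * EE c x))
          \<le> (2 * Sf + integral {0..1} (\<lambda>x. \<bar>deriv f x\<bar>)) / cmod c"
      using True by (intro int_bound_parts[OF sp c _ _ _ Sf]) auto
    have "cmod (integral {?u..?v} (\<lambda>x. complex_of_real (f x) * EE c x)) \<le> integral {?u..?v} (\<lambda>x. Sf)"
    proof (rule integral_norm_bound_integral)
      show "(\<lambda>x. complex_of_real (f x) * EE c x) integrable_on {?u..?v}"
        by (intro integrable_continuous_interval continuous_intros continuous_on_compose2[OF continuous_on_of_real_id sp_cont[OF sp]]) auto
      show "(\<lambda>x. Sf) integrable_on {?u..?v}" by (rule integrable_const_ivl)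
      fix x assume "x \<in> {?u..?v}"
      then show "cmod (complex_of_real (f x) * EE c x) \<le> Sf"
        using Sf[of x] c by (auto simp: norm_mult norm_EE)
    qed
    also have "\<dots> = (?v - ?u) * Sf" using True by simp
    also have "\<dots> \<le> (\<beta> - \<alpha>) * Sf" using Sf0 by (intro mult_right_mono) auto
    finally show ?thesis using b1 by simp
  qed
  then show "cmod (integral {?u..?v} (\<lambda>x. complex_of_real (f x) * EE c x))
          \<le> (2 * Sf + integral {0..1} (\<lambda>x. \<bar>deriv f x\<bar>)) / cmod c"
    and "cmod (integral {?u..?v} (\<lambda>x. complex_of_real (f x) * EE c x)) \<le> (\<beta> - \<alpha>) * Sf" by auto
qed

definition hatd :: "real \<Rightarrow> real" where
  "hatd y = indicator {-1<..<0} y - indicator {0<..<1} y"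

lemma hat_cont [continuous_intros]: "continuous_on S hat"
  unfolding hat_def[abs_def] by (intro continuous_intros)

lemma hat_deriv:
  assumes "y \<notin> {-1, 0, 1}"
  shows "(hat has_real_derivative hatd y) (at y)"
proof -
  consider "y < -1" | "-1 < y \<and> y < 0" | "0 < y \<and> y < 1" | "1 < y" using assms by force
  then show ?thesis
  proof cases
    case 1
    show ?thesis
      by (rule has_field_derivative_transform_within_open[of "\<lambda>_. 0" _ _ "{..< -1}"])
         (use 1 in \<open>auto simp: hatd_def hat_def\<close>)
  next
    case 2
    show ?thesis
      by (rule has_field_derivative_transform_within_open[of "\<lambda>x. 1 + x" _ _ "{-1<..<0}"])
         (use 2 in \<open>auto simp: hatd_def hat_def intro!: derivative_eq_intros\<close>)
  next
    case 3
    show ?thesis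
      by (rule has_field_derivative_transform_within_open[of "\<lambda>x. 1 - x" _ _ "{0<..<1}"])
         (use 3 in \<open>auto simp: hatd_def hat_def intro!: derivative_eq_intros\<close>)
  next
    case 4
    show ?thesis
      by (rule has_field_derivative_transform_within_open[of "\<lambda>_. 0" _ _ "{1<..}"])
         (use 4 in \<open>auto simp: hatd_def hat_def\<close>)
  qed
qed

lemma hat_bounds: "0 \<le> hat y" "hat y \<le> 1" by (auto simp: hat_def)

lemma hat_zero: "\<bar>y\<bar> \<ge> 1 \<Longrightarrow> hat y = 0" by (auto simp: hat_def)

lemma hatd_affine:
  assumes s: "s > 0"
  shows "hatd (s * x - a) = indicator {(a - 1) / s<..<a / s} x - indicator {a / s<..<(a + 1) / s} x"
  using s by (auto simp: hatd_def indicator_def field_simps)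

lemma atom_has_integral:
  fixes g :: "real \<Rightarrow> complex"
  assumes s: "s > 0" and g: "continuous_on {0..1} g"
  shows "((\<lambda>x. complex_of_real (hatd (s * x - a)) * g x) has_integral
          (integral {max ((a - 1) / s) 0..min (a / s) 1} g - integral {max (a / s) 0..min ((a + 1) / s) 1} g)) {0..1}"
proof -
  have "((\<lambda>x. complex_of_real (indicator {(a - 1) / s<..<a / s} x) * g x
           - complex_of_real (indicator {a / s<..<(a + 1) / s} x) * g x) has_integral
          (integral {max ((a - 1) / s) 0..min (a / s) 1} g - integral {max (a / s) 0..min ((a + 1) / s) 1} g)) {0..1}"
    by (intro has_integral_diff piece_has_integral g)
  then show ?thesis
    by (rule has_integral_eq[rotated]) (simp add: hatd_affine[OF s] left_diff_distrib)
qed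

lemma atom_bound:
  fixes f :: "real \<Rightarrow> real"
  assumes s: "s > 0" and sp: "smooth_periodic f" and c: "c \<noteq> 0" "Re c = 0"
    and Sf: "\<And>x. x \<in> {0..1} \<Longrightarrow> \<bar>f x\<bar> \<le> Sf"
  shows "cmod (integral {0..1} (\<lambda>x. complex_of_real (hatd (s * x - a)) * (complex_of_real (f x) * EE c x)))
          \<le> 2 * ((2 * Sf + integral {0..1} (\<lambda>x. \<bar>deriv f x\<bar>)) / cmod c)"
    and "cmod (integral {0..1} (\<lambda>x. complex_of_real (hatd (s * x - a)) * (complex_of_real (f x) * EE c x)))
          \<le> 2 * Sf / s"
proof -
  let ?g = "\<lambda>x. complex_of_real (f x) * EE c x"
  have gc: "continuous_on {0..1} ?g"
    by (intro continuous_intros continuous_on_compose2[OF continuous_on_of_real_id sp_cont[OF sp]]) auto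
  let ?I1 = "integral {max ((a - 1) / s) 0..min (a / s) 1} ?g"
  let ?I2 = "integral {max (a / s) 0..min ((a + 1) / s) 1} ?g"
  have e: "integral {0..1} (\<lambda>x. complex_of_real (hatd (s * x - a)) * ?g x) = ?I1 - ?I2"
    using atom_has_integral[OF s gc] by (rule integral_unique)
  have le1: "(a - 1) / s \<le> a / s" "a / s \<le> (a + 1) / s" using s by (auto simp: divide_right_mono)
  have len: "a / s - (a - 1) / s = 1 / s" "(a + 1) / s - a / s = 1 / s" using s by (auto simp: field_simps)
  have "cmod (?I1 - ?I2) \<le> cmod ?I1 + cmod ?I2" by (rule norm_triangle_ineq4)
  then show "cmod (integral {0..1} (\<lambda>x. complex_of_real (hatd (s * x - a)) * ?g x))
          \<le> 2 * ((2 * Sf + integral {0..1} (\<lambda>x. \<bar>deriv f x\<bar>)) / cmod c)"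
    using piece_bound(1)[OF sp c le1(1) Sf] piece_bound(1)[OF sp c le1(2) Sf] unfolding e by linarith
  have "cmod (?I1 - ?I2) \<le> cmod ?I1 + cmod ?I2" by (rule norm_triangle_ineq4)
  then show "cmod (integral {0..1} (\<lambda>x. complex_of_real (hatd (s * x - a)) * ?g x)) \<le> 2 * Sf / s"
    using piece_bound(2)[OF sp c le1(1) Sf] piece_bound(2)[OF sp c le1(2) Sf] unfolding e len by simp
qed

lemma atom_ibp:
  assumes s: "s > 0" and sp: "smooth_periodic f"
  shows "((\<lambda>x. f x * (s * hatd (s * x - a))) has_integral
          (f 1 * hat (s - a) - f 0 * hat (- a) - integral {0..1} (\<lambda>x. deriv f x * hat (s * x - a)))) {0..1}"
proof -
  define K where "K = {(a - 1) / s, a / s, (a + 1) / s}"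
  have fin: "finite K" by (simp add: K_def)
  have der: "((\<lambda>x. f x * hat (s * x - a)) has_vector_derivative
               (f x * (hatd (s * x - a) * s) + deriv f x * hat (s * x - a))) (at x)"
    if x: "x \<in> {0<..<1} - K" for x
  proof -
    have nk: "s * x - a \<notin> {-1, 0, 1}"
      using x s by (auto simp: K_def field_simps)
    have h: "((\<lambda>x. hat (s * x - a)) has_real_derivative hatd (s * x - a) * s) (at x)"
    proof (rule DERIV_chain2[where g="\<lambda>x. s * x - a"])
      show "(hat has_real_derivative hatd (s * x - a)) (at (s * x - a))" by (rule hat_deriv[OF nk])
      show "((\<lambda>x. s * x - a) has_real_derivative s) (at x)" by (auto intro!: derivative_eq_intros)
    qed
    have "((\<lambda>x. f x * hat (s * x - a)) has_real_derivative
               (f x * (hatd (s * x - a) * s) + deriv f x * hat (s * x - a))) (at x)"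
      by (rule DERIV_mult'[OF sp_has_deriv[OF sp] h, THEN DERIV_cong]) (simp add: algebra_simps)
    then show ?thesis by (simp add: has_real_derivative_iff_has_vector_derivative)
  qed
  have cH: "continuous_on {0..1} (\<lambda>x. f x * hat (s * x - a))"
    by (intro continuous_intros sp_cont[OF sp] continuous_on_compose2[OF hat_cont]) auto
  have ftc: "((\<lambda>x. f x * (hatd (s * x - a) * s) + deriv f x * hat (s * x - a)) has_integral
           (f 1 * hat (s * 1 - a) - f 0 * hat (s * 0 - a))) {0..1}"
    by (rule fundamental_theorem_of_calculus_interior_strong[OF fin _ der cH]) auto
  have i2: "((\<lambda>x. deriv f x * hat (s * x - a)) has_integral integral {0..1} (\<lambda>x. deriv f x * hat (s * x - a))) {0..1}"
    by (intro integrable_integral integrable_continuous_interval continuous_intros sp_deriv_cont[OF sp]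
        continuous_on_compose2[OF hat_cont]) auto
  from has_integral_diff[OF ftc i2]
  have "((\<lambda>x. f x * (s * hatd (s * x - a))) has_integral
          (f 1 * hat (s * 1 - a) - f 0 * hat (s * 0 - a) - integral {0..1} (\<lambda>x. deriv f x * hat (s * x - a)))) {0..1}"
    by (rule has_integral_eq[rotated]) (simp add: algebra_simps)
  then show ?thesis by simp
qed

definition bcoef :: "nat \<Rightarrow> real" where
  "bcoef i = (if i = 2 then -3/2 else if i = 1 \<or> i = 3 then 1/2 else 1/4)"

lemma wav_atoms: "wav y = (\<Sum>i<5. bcoef i * hat (2 * y - (real i - 1)))"
  by (simp add: wav_def bcoef_def numeral_eq_Suc algebra_simps)

lemma bcoef_bound: "\<bar>bcoef i\<bar> \<le> 3/2" by (simp add: bcoef_def)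

lemma psi_atoms:
  assumes j: "j \<in> J l0 L" and l0: "l0 \<ge> 2"
  shows "\<exists>w t. (\<forall>y. psi l0 j y = (\<Sum>i<(5::nat). w i * hat ((2::real) ^ (fst j + 1) * y - t i)))
              \<and> (\<forall>i. \<bar>w i\<bar> \<le> 2 * 2 powr (real (fst j) / 2))
              \<and> (\<forall>i<(5::nat). -1 \<le> t i \<and> t i \<le> (2::real) ^ (fst j + 1) + 1)"
proof -
  obtain l k where jlk: "j = (l, k)" by (cases j)
  from j consider "l = l0 - 1" "0 \<le> k" "k < 2 ^ l0" | "l0 \<le> l" "l < L" "0 \<le> k" "k < 2 ^ l"
    unfolding J_def jlk by auto
  then show ?thesis
  proof cases
    case 1
    have ll: "l + 1 = l0" using 1 l0 by simp
    define w where "w i = (if i = 0 then 2 powr (real l0 / 2) else 0)" for i :: nat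
    define t where "t i = (if i = 0 then real_of_int k else 0)" for i :: nat
    have sum: "(\<Sum>i<5. w i * hat ((2::real) ^ (l + 1) * y - t i)) = 2 powr (real l0 / 2) * hat (2 ^ l0 * y - real_of_int k)" for y
      unfolding w_def t_def ll by (simp add: numeral_eq_Suc lessThan_Suc)
    have "psi l0 j y = (\<Sum>i<5. w i * hat ((2::real) ^ (l + 1) * y - t i))" for y
      unfolding sum psi_def jlk using 1 by simp
    moreover have "\<bar>w i\<bar> \<le> 2 * 2 powr (real l / 2)" for i
    proof -
      have "2 powr (real l0 / 2) = 2 powr (1/2) * 2 powr (real l / 2)"
      proof -
        have "real l0 / 2 = 1/2 + real l / 2" using ll by (simp add: field_simps flip: of_nat_Suc)
        then show ?thesis by (simp only: powr_add)
      qed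
      also have "\<dots> \<le> 2 * 2 powr (real l / 2)"
      proof (intro mult_right_mono)
        have "(2::real) powr (1/2) \<le> 2 powr 1" by (intro powr_mono) auto
        then show "(2::real) powr (1/2) \<le> 2" by simp
      qed simp
      finally show ?thesis unfolding w_def by auto
    qed
    moreover have "-1 \<le> t i \<and> t i \<le> (2::real) ^ (l + 1) + 1" for i
    proof -
      have "real_of_int k \<le> 2 ^ l0"
        using 1 by (metis le_less of_int_le_iff of_int_numeral of_int_power)
      then have "real_of_int k \<le> 2 ^ l0 + 1" by linarith
      moreover have "0 \<le> real_of_int k" using 1 by simp
      ultimately show ?thesis unfolding t_def ll by auto
    qed
    ultimately show ?thesis unfolding jlk fst_conv by blast
  next
    case 2
    have lne: "l \<noteq> l0 - 1" using 2 l0 by auto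
    define w where "w i = 2 powr (real l / 2) * bcoef i" for i :: nat
    define t where "t i = 2 * real_of_int k + real i - 1" for i :: nat
    have "psi l0 j y = (\<Sum>i<5. w i * hat ((2::real) ^ (l + 1) * y - t i))" for y
    proof -
      have "psi l0 j y = 2 powr (real l / 2) * wav (2 ^ l * y - real_of_int k)"
        unfolding psi_def jlk using lne by simp
      also have "\<dots> = (\<Sum>i<5. w i * hat ((2::real) ^ (l + 1) * y - t i))"
        unfolding wav_atoms sum_distrib_left w_def t_def
        by (intro sum.cong refl) (simp add: algebra_simps)
      finally show ?thesis .
    qed
    moreover have "\<bar>w i\<bar> \<le> 2 * 2 powr (real l / 2)" for i
      unfolding w_def using bcoef_bound[of i] by (simp add: abs_mult mult_right_mono)
    moreover have "-1 \<le> t i \<and> t i \<le> (2::real) ^ (l + 1) + 1" if "i < 5" for i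
    proof -
      have "real_of_int k + 1 \<le> 2 ^ l"
        using 2 by (metis int_less_real_le of_int_numeral of_int_power)
      then show ?thesis unfolding t_def using 2 that by auto
    qed
    ultimately show ?thesis unfolding jlk fst_conv by blast
  qed
qed

definition Pfun :: "(int \<times> nat) set \<Rightarrow> (int \<times> nat \<Rightarrow> real) \<Rightarrow> (int \<times> nat \<Rightarrow> real) \<Rightarrow> real \<Rightarrow> real \<Rightarrow> real" where
  "Pfun I c a s x = (\<Sum>p\<in>I. c p * hat (s * x - a p))"

definition Dfun :: "(int \<times> nat) set \<Rightarrow> (int \<times> nat \<Rightarrow> real) \<Rightarrow> (int \<times> nat \<Rightarrow> real) \<Rightarrow> real \<Rightarrow> real \<Rightarrow> real" where
  "Dfun I c a s x = (\<Sum>p\<in>I. c p * (s * hatd (s * x - a p)))"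

definition Iset :: "(int \<times> nat) set" where "Iset = {-1, 0, 1} \<times> {..<5}"

lemma finite_Iset [simp]: "finite Iset" by (simp add: Iset_def)
lemma card_Iset: "card Iset = 15" by (simp add: Iset_def card_cartesian_product)

lemma atoms_support:
  fixes \<psi> :: "real \<Rightarrow> real"
  assumes rep: "\<And>y. \<psi> y = (\<Sum>i<(5::nat). w i * hat (s * y - t i))" and s: "s \<ge> 4"
    and t: "\<And>i. i < 5 \<Longrightarrow> -1 \<le> t i \<and> t i \<le> s + 1"
    and y: "y \<le> -1/2 \<or> y \<ge> 3/2"
  shows "\<psi> y = 0"
proof -
  have "hat (s * y - t i) = 0" if i: "i < 5" for i
  proof (rule hat_zero)
    from y show "1 \<le> \<bar>s * y - t i\<bar>"
    proof
      assume "y \<le> -1/2"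
      then have "s * y \<le> s * (-1/2)" using s by (intro mult_left_mono) auto
      then have "s * y - t i \<le> -1" using t[OF i] s by linarith
      then show ?thesis by linarith
    next
      assume "y \<ge> 3/2"
      then have "s * y \<ge> s * (3/2)" using s by (intro mult_left_mono) auto
      then have "s * y - t i \<ge> 1" using t[OF i] s by linarith
      then show ?thesis by linarith
    qed
  qed
  then show ?thesis unfolding rep by simp
qed

lemma periodize_atoms:
  fixes \<psi> :: "real \<Rightarrow> real"
  assumes rep: "\<And>y. \<psi> y = (\<Sum>i<(5::nat). w i * hat (s * y - t i))" and s: "s \<ge> 4"
    and t: "\<And>i. i < 5 \<Longrightarrow> -1 \<le> t i \<and> t i \<le> s + 1"
    and x: "x \<in> Dom"
  shows "periodize \<psi> x = \<psi> (x - 1) + \<psi> x + \<psi> (x + 1)"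
proof -
  have z: "\<psi> (x + real_of_int n) = 0" if "n \<notin> {-1, 0, 1}" for n
  proof (rule atoms_support[OF rep s t])
    from that have "n \<le> -2 \<or> n \<ge> 2" by auto
    then show "x + real_of_int n \<le> -1/2 \<or> x + real_of_int n \<ge> 3/2"
    proof
      assume "n \<le> -2" then have "real_of_int n \<le> -2" by simp
      then show ?thesis using x by (auto simp: Dom_def)
    next
      assume "n \<ge> 2" then have "real_of_int n \<ge> 2" by simp
      then show ?thesis using x by (auto simp: Dom_def)
    qed
  qed auto
  have "periodize \<psi> x = infsum (\<lambda>n::int. \<psi> (x + real_of_int n)) {-1, 0, 1}"
    unfolding periodize_def by (rule infsum_cong_neutral) (use z in auto)
  also have "\<dots> = \<psi> (x - 1) + \<psi> x + \<psi> (x + 1)" by simp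
  finally show ?thesis .
qed

lemma psihat_rep:
  assumes j: "j \<in> J l0 L" and l0: "l0 \<ge> 2"
  shows "\<exists>c a. (\<forall>x\<in>Dom. psihat l0 j x = complex_of_real (Pfun Iset c a ((2::real) ^ (fst j + 1)) x))
           \<and> (\<forall>p. \<bar>c p\<bar> \<le> 2 * 2 powr (- (real (fst j) / 2)))
           \<and> Pfun Iset c a ((2::real) ^ (fst j + 1)) 0 = Pfun Iset c a ((2::real) ^ (fst j + 1)) 1"
proof -
  let ?s = "(2::real) ^ (fst j + 1)"
  let ?l = "fst j"
  obtain w t where rep: "\<And>y. psi l0 j y = (\<Sum>i<(5::nat). w i * hat (?s * y - t i))"
    and wb: "\<And>i. \<bar>w i\<bar> \<le> 2 * 2 powr (real ?l / 2)"
    and tb: "\<And>i. i < 5 \<Longrightarrow> -1 \<le> t i \<and> t i \<le> ?s + 1"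
    using psi_atoms[OF j l0] by blast
  have l1: "fst j \<ge> 1"
    using j l0 unfolding J_def by auto
  have s4: "?s \<ge> 4"
  proof -
    have "(2::real) ^ 2 \<le> 2 ^ (fst j + 1)" using l1 by (intro power_increasing) auto
    then show ?thesis by simp
  qed
  define c where "c p = 2 powr (- real ?l) * w (snd p)" for p :: "int \<times> nat"
  define a where "a p = t (snd p) - ?s * real_of_int (fst p)" for p :: "int \<times> nat"
  have P: "Pfun Iset c a ?s x = 2 powr (- real ?l) * (psi l0 j (x - 1) + psi l0 j x + psi l0 j (x + 1))" for x
  proof -
    have "Pfun Iset c a ?s x = (\<Sum>n\<in>{-1,0,1::int}. \<Sum>i<(5::nat). c (n, i) * hat (?s * x - a (n, i)))"
      unfolding Pfun_def Iset_def by (simp add: sum.cartesian_product)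
    also have "\<dots> = (\<Sum>n\<in>{-1,0,1::int}. 2 powr (- real ?l) * psi l0 j (x + real_of_int n))"
      unfolding rep c_def a_def sum_distrib_left
      by (intro sum.cong refl) (simp add: algebra_simps)
    also have "\<dots> = 2 powr (- real ?l) * (psi l0 j (x - 1) + psi l0 j x + psi l0 j (x + 1))"
      by (simp add: algebra_simps)
    finally show ?thesis .
  qed
  have "\<forall>x\<in>Dom. psihat l0 j x = complex_of_real (Pfun Iset c a ?s x)"
    using periodize_atoms[OF rep s4 tb] unfolding psihat_def P by simp
  moreover have "\<forall>p. \<bar>c p\<bar> \<le> 2 * 2 powr (- (real ?l / 2))"
  proof
    fix p
    have "\<bar>c p\<bar> = 2 powr (- real ?l) * \<bar>w (snd p)\<bar>" unfolding c_def by (simp add: abs_mult)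
    also have "\<dots> \<le> 2 powr (- real ?l) * (2 * 2 powr (real ?l / 2))" using wb by (intro mult_left_mono) auto
    also have "\<dots> = 2 * (2 powr (- real ?l) * 2 powr (real ?l / 2))" by simp
    also have "2 powr (- real ?l) * 2 powr (real ?l / 2) = (2::real) powr (- (real ?l / 2))"
      by (simp add: powr_add[symmetric])
    finally show "\<bar>c p\<bar> \<le> 2 * 2 powr (- (real ?l / 2))" .
  qed
  moreover have "Pfun Iset c a ?s 0 = Pfun Iset c a ?s 1"
  proof -
    have "psi l0 j (0 - 1) = 0" "psi l0 j (1 + 1) = 0"
      by (rule atoms_support[OF rep s4 tb]; simp)+
    then show ?thesis unfolding P by simp
  qed
  ultimately show ?thesis by blast
qed



lemma hatd_bound: "\<bar>hatd y\<bar> \<le> 1" by (simp add: hatd_def indicator_def)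

lemma hatd_meas [measurable]: "hatd \<in> borel_measurable borel"
  unfolding hatd_def[abs_def] by measurable

lemma Dfun_meas: "Dfun I c a s \<in> borel_measurable borel"
  unfolding Dfun_def[abs_def] by measurable

lemma Pfun_cont [continuous_intros]: "continuous_on S (Pfun I c a s)"
  unfolding Pfun_def[abs_def] by (intro continuous_intros continuous_on_compose2[OF hat_cont]) auto

lemma sum_Iset_bound:
  fixes g :: "int \<times> nat \<Rightarrow> real"
  assumes "\<And>p. \<bar>g p\<bar> \<le> B"
  shows "\<bar>\<Sum>p\<in>Iset. g p\<bar> \<le> 15 * B"
proof -
  have "\<bar>\<Sum>p\<in>Iset. g p\<bar> \<le> (\<Sum>p\<in>Iset. \<bar>g p\<bar>)" by (rule sum_abs)
  also have "\<dots> \<le> (\<Sum>p\<in>Iset. B)" using assms by (intro sum_mono) auto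
  also have "\<dots> = 15 * B" by (simp add: card_Iset)
  finally show ?thesis .
qed

lemma Pfun_bound:
  assumes "\<And>p. \<bar>c p\<bar> \<le> \<gamma>"
  shows "\<bar>Pfun Iset c a s x\<bar> \<le> 15 * \<gamma>"
  unfolding Pfun_def
proof (rule sum_Iset_bound)
  fix p
  have "\<bar>c p * hat (s * x - a p)\<bar> = \<bar>c p\<bar> * hat (s * x - a p)" using hat_bounds by (simp add: abs_mult)
  also have "\<dots> \<le> \<gamma> * 1" using assms[of p] hat_bounds[of "s * x - a p"] by (intro mult_mono) auto
  finally show "\<bar>c p * hat (s * x - a p)\<bar> \<le> \<gamma>" by simp
qed

lemma Dfun_bound:
  assumes "\<And>p. \<bar>c p\<bar> \<le> \<gamma>" and s: "s > 0"
  shows "\<bar>Dfun Iset c a s x\<bar> \<le> 15 * (\<gamma> * s)"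
  unfolding Dfun_def
proof (rule sum_Iset_bound)
  fix p
  have "\<bar>c p * (s * hatd (s * x - a p))\<bar> = \<bar>c p\<bar> * (s * \<bar>hatd (s * x - a p)\<bar>)" using s by (simp add: abs_mult)
  also have "\<dots> \<le> \<gamma> * (s * 1)" using assms(1)[of p] hatd_bound[of "s * x - a p"] s
    by (intro mult_mono) auto
  finally show "\<bar>c p * (s * hatd (s * x - a p))\<bar> \<le> \<gamma> * s" by simp
qed

lemma smooth_E1:
  assumes sp: "smooth_periodic f" and s: "s > 0" and cb: "\<And>p. \<bar>c p\<bar> \<le> \<gamma>"
    and c0: "c0 \<noteq> 0" "Re c0 = 0"
    and Sf: "\<And>x. x \<in> {0..1} \<Longrightarrow> \<bar>f x\<bar> \<le> Sf"
  shows "cmod (LINT x:Dom|lborel. complex_of_real (f x) * (complex_of_real (Dfun Iset c a s x) * EE c0 x)) \<le> 30 * \<gamma> * Sf"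
    and "cmod (LINT x:Dom|lborel. complex_of_real (f x) * (complex_of_real (Dfun Iset c a s x) * EE c0 x))
           \<le> 30 * \<gamma> * s * ((2 * Sf + integral {0..1} (\<lambda>x. \<bar>deriv f x\<bar>)) / cmod c0)"
proof -
  let ?W = "\<lambda>x. complex_of_real (Dfun Iset c a s x) * EE c0 x"
  let ?g = "\<lambda>x. complex_of_real (f x) * EE c0 x"
  let ?V = "integral {0..1} (\<lambda>x. \<bar>deriv f x\<bar>)"
  have \<gamma>: "\<gamma> \<ge> 0" using cb[of undefined] by simp
  have Wm: "?W \<in> borel_measurable lborel"
    using Dfun_meas[of Iset c a s] by (simp add: EE_def)
  have Wb: "cmod (?W x) \<le> 15 * (\<gamma> * s)" for x
    using Dfun_bound[OF cb s, where a=a and x=x] c0 by (simp add: norm_mult norm_EE)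
  have L2f: "L2 f" by (rule cont_L2[OF sp_cont[OF sp]])
  have int: "set_integrable lborel Dom (\<lambda>x. complex_of_real (f x) * ?W x)"
    using kernel_integrable(1)[OF L2f Wm Wb] .
  have gc: "continuous_on {0..1} ?g"
    by (intro continuous_intros continuous_on_compose2[OF continuous_on_of_real_id sp_cont[OF sp]]) auto
  define A where "A p = integral {0..1} (\<lambda>x. complex_of_real (hatd (s * x - a p)) * ?g x)" for p
  have hasA: "((\<lambda>x. complex_of_real (hatd (s * x - a p)) * ?g x) has_integral A p) {0..1}" for p
    unfolding A_def by (rule integrable_integral[OF has_integral_integrable[OF atom_has_integral[OF s gc]]])
  have "((\<lambda>x. \<Sum>p\<in>Iset. complex_of_real (c p * s) * (complex_of_real (hatd (s * x - a p)) * ?g x))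
          has_integral (\<Sum>p\<in>Iset. complex_of_real (c p * s) * A p)) {0..1}"
    by (intro has_integral_sum finite_Iset has_integral_mult_right hasA)
  then have hasS: "((\<lambda>x. complex_of_real (f x) * ?W x) has_integral (\<Sum>p\<in>Iset. complex_of_real (c p * s) * A p)) {0..1}"
  proof (rule has_integral_eq[rotated])
    fix x
    show "(\<Sum>p\<in>Iset. complex_of_real (c p * s) * (complex_of_real (hatd (s * x - a p)) * ?g x))
        = complex_of_real (f x) * ?W x"
      unfolding Dfun_def of_real_sum sum_distrib_left sum_distrib_right
      by (intro sum.cong refl) (simp add: mult_ac)
  qed
  have eq: "(LINT x:Dom|lborel. complex_of_real (f x) * ?W x) = (\<Sum>p\<in>Iset. complex_of_real (c p * s) * A p)"
    using set_borel_integral_eq_integral(2)[OF int] integral_unique[OF hasS]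
    by (simp add: Dom_def integral_open_interval_real)
  have b1: "cmod (A p) \<le> 2 * ((2 * Sf + ?V) / cmod c0)" for p
    unfolding A_def by (rule atom_bound(1)[OF s sp c0 Sf])
  have b2: "cmod (A p) \<le> 2 * Sf / s" for p
    unfolding A_def by (rule atom_bound(2)[OF s sp c0 Sf])
  have Sf0: "Sf \<ge> 0" using Sf[of 0] by simp
  have "cmod (\<Sum>p\<in>Iset. complex_of_real (c p * s) * A p) \<le> (\<Sum>p\<in>Iset. cmod (complex_of_real (c p * s) * A p))"
    by (rule norm_sum)
  also have "\<dots> \<le> (\<Sum>p\<in>Iset. \<gamma> * s * (2 * Sf / s))"
  proof (rule sum_mono)
    fix p
    have "cmod (complex_of_real (c p * s) * A p) = \<bar>c p\<bar> * s * cmod (A p)" using s by (simp add: norm_mult abs_mult)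
    also have "\<dots> \<le> \<gamma> * s * (2 * Sf / s)" using cb[of p] b2[of p] s \<gamma> by (intro mult_mono) auto
    finally show "cmod (complex_of_real (c p * s) * A p) \<le> \<gamma> * s * (2 * Sf / s)" .
  qed
  also have "\<dots> = 30 * \<gamma> * Sf" using s by (simp add: card_Iset)
  finally show "cmod (LINT x:Dom|lborel. complex_of_real (f x) * ?W x) \<le> 30 * \<gamma> * Sf" unfolding eq .
  have "cmod (\<Sum>p\<in>Iset. complex_of_real (c p * s) * A p) \<le> (\<Sum>p\<in>Iset. cmod (complex_of_real (c p * s) * A p))"
    by (rule norm_sum)
  also have "\<dots> \<le> (\<Sum>p\<in>Iset. \<gamma> * s * (2 * ((2 * Sf + ?V) / cmod c0)))"
  proof (rule sum_mono)
    fix p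
    have "cmod (complex_of_real (c p * s) * A p) = \<bar>c p\<bar> * s * cmod (A p)" using s by (simp add: norm_mult abs_mult)
    also have "\<dots> \<le> \<gamma> * s * (2 * ((2 * Sf + ?V) / cmod c0))"
      using cb[of p] b1[of p] s \<gamma> by (intro mult_mono) auto
    finally show "cmod (complex_of_real (c p * s) * A p) \<le> \<gamma> * s * (2 * ((2 * Sf + ?V) / cmod c0))" .
  qed
  also have "\<dots> = 30 * \<gamma> * s * ((2 * Sf + ?V) / cmod c0)" by (simp add: card_Iset)
  finally show "cmod (LINT x:Dom|lborel. complex_of_real (f x) * ?W x) \<le> 30 * \<gamma> * s * ((2 * Sf + ?V) / cmod c0)"
    unfolding eq .
qed

lemma L1_HK_le:
  assumes "continuous_on {0..1} g"
  shows "(integral {0..1} (\<lambda>x. \<bar>g x\<bar>))\<^sup>2 \<le> L2norm_sq g" "integral {0..1} (\<lambda>x. \<bar>g x\<bar>) \<ge> 0"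
proof -
  have "(LINT x:Dom|lborel. \<bar>g x\<bar>) = integral {0..1} (\<lambda>x. \<bar>g x\<bar>)"
    by (rule LINT_eq_HK) (intro continuous_intros assms)
  then show "(integral {0..1} (\<lambda>x. \<bar>g x\<bar>))\<^sup>2 \<le> L2norm_sq g"
    using L1_le_L2(2)[OF cont_L2[OF assms]] by simp
  show "integral {0..1} (\<lambda>x. \<bar>g x\<bar>) \<ge> 0"
    by (rule integral_nonneg) (auto intro!: integrable_continuous_interval continuous_intros assms)
qed

lemma smooth_E1_L2:
  assumes sp: "smooth_periodic f" and s: "s > 0" and cb: "\<And>p. \<bar>c p\<bar> \<le> \<gamma>"
    and c0: "c0 \<noteq> 0" "Re c0 = 0"
  shows "(cmod (LINT x:Dom|lborel. complex_of_real (f x) * (complex_of_real (Dfun Iset c a s x) * EE c0 x)))\<^sup>2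
           \<le> 1800 * \<gamma>\<^sup>2 * (L2norm_sq f + L2norm_sq (deriv f))"
    and "(cmod (LINT x:Dom|lborel. complex_of_real (f x) * (complex_of_real (Dfun Iset c a s x) * EE c0 x)))\<^sup>2
           \<le> 11700 * \<gamma>\<^sup>2 * s\<^sup>2 * (L2norm_sq f + L2norm_sq (deriv f)) / (cmod c0)\<^sup>2"
proof -
  let ?X = "cmod (LINT x:Dom|lborel. complex_of_real (f x) * (complex_of_real (Dfun Iset c a s x) * EE c0 x))"
  define A where "A = integral {0..1} (\<lambda>x. \<bar>f x\<bar>)"
  define V where "V = integral {0..1} (\<lambda>x. \<bar>deriv f x\<bar>)"
  have A: "A\<^sup>2 \<le> L2norm_sq f" "A \<ge> 0" unfolding A_def using L1_HK_le[OF sp_cont[OF sp]] by auto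
  have V: "V\<^sup>2 \<le> L2norm_sq (deriv f)" "V \<ge> 0" unfolding V_def using L1_HK_le[OF sp_deriv_cont[OF sp]] by auto
  have \<gamma>: "\<gamma> \<ge> 0" using cb[of undefined] by simp
  have Sf: "\<And>x. x \<in> {0..1} \<Longrightarrow> \<bar>f x\<bar> \<le> A + V" unfolding A_def V_def by (rule sup_bound[OF sp])
  have X0: "?X \<ge> 0" by simp
  have b1: "?X \<le> 30 * \<gamma> * (A + V)" by (rule smooth_E1(1)[OF sp s cb c0 Sf])
  have b2: "?X \<le> 30 * \<gamma> * s * ((2 * (A + V) + V) / cmod c0)"
    using smooth_E1(2)[OF sp s cb c0 Sf] unfolding V_def .
  have "?X\<^sup>2 \<le> (30 * \<gamma> * (A + V))\<^sup>2" using b1 X0 by (intro power_mono) auto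
  also have "\<dots> = 900 * \<gamma>\<^sup>2 * (A + V)\<^sup>2" by (simp add: power_mult_distrib)
  also have "\<dots> \<le> 900 * \<gamma>\<^sup>2 * (2 * (L2norm_sq f + L2norm_sq (deriv f)))"
  proof (intro mult_left_mono)
    have "(A + V)\<^sup>2 \<le> 2 * (A\<^sup>2 + V\<^sup>2)"
    proof -
      have "0 \<le> (A - V)\<^sup>2" by simp
      then show ?thesis by (simp add: power2_eq_square algebra_simps)
    qed
    also have "2 * (A\<^sup>2 + V\<^sup>2) \<le> 2 * (L2norm_sq f + L2norm_sq (deriv f))"
      using A(1) V(1) by (intro mult_left_mono add_mono) auto
    finally show "(A + V)\<^sup>2 \<le> 2 * (L2norm_sq f + L2norm_sq (deriv f))" .
  qed auto
  also have "\<dots> = 1800 * \<gamma>\<^sup>2 * (L2norm_sq f + L2norm_sq (deriv f))" by simp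
  finally show "?X\<^sup>2 \<le> 1800 * \<gamma>\<^sup>2 * (L2norm_sq f + L2norm_sq (deriv f))" .
  have cpos: "cmod c0 > 0" using c0 by simp
  have "?X\<^sup>2 \<le> (30 * \<gamma> * s * ((2 * A + 3 * V) / cmod c0))\<^sup>2"
    using b2 X0 by (intro power_mono) (auto simp: algebra_simps)
  also have "\<dots> = 900 * \<gamma>\<^sup>2 * s\<^sup>2 * (2 * A + 3 * V)\<^sup>2 / (cmod c0)\<^sup>2"
    by (simp add: power_mult_distrib power_divide)
  also have "\<dots> \<le> 900 * \<gamma>\<^sup>2 * s\<^sup>2 * (13 * (L2norm_sq f + L2norm_sq (deriv f))) / (cmod c0)\<^sup>2"
  proof (intro divide_right_mono mult_left_mono)
    have "(2 * A + 3 * V)\<^sup>2 \<le> 13 * (A\<^sup>2 + V\<^sup>2)"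
    proof -
      have "0 \<le> (3 * A - 2 * V)\<^sup>2" by simp
      then show ?thesis by (simp add: power2_eq_square algebra_simps)
    qed
    also have "13 * (A\<^sup>2 + V\<^sup>2) \<le> 13 * (L2norm_sq f + L2norm_sq (deriv f))"
      using A(1) V(1) by (intro mult_left_mono add_mono) auto
    finally show "(2 * A + 3 * V)\<^sup>2 \<le> 13 * (L2norm_sq f + L2norm_sq (deriv f))" .
  qed auto
  also have "\<dots> = 11700 * \<gamma>\<^sup>2 * s\<^sup>2 * (L2norm_sq f + L2norm_sq (deriv f)) / (cmod c0)\<^sup>2" by simp
  finally show "?X\<^sup>2 \<le> 11700 * \<gamma>\<^sup>2 * s\<^sup>2 * (L2norm_sq f + L2norm_sq (deriv f)) / (cmod c0)\<^sup>2" .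
qed

lemma EE_0 [simp]: "EE 0 x = 1" by (simp add: EE_def)

lemma smooth_E2:
  assumes sp: "smooth_periodic f" and s: "s > 0" and cb: "\<And>p. \<bar>c p\<bar> \<le> \<gamma>"
    and P01: "Pfun Iset c a s 0 = Pfun Iset c a s 1"
  shows "(cmod (LINT x:Dom|lborel. complex_of_real (f x) * (complex_of_real (Dfun Iset c a s x) * EE 0 x)))\<^sup>2
           \<le> L2norm_sq (deriv f) * L2norm_sq (Pfun Iset c a s)"
proof -
  let ?D = "Dfun Iset c a s" and ?P = "Pfun Iset c a s"
  have \<gamma>: "\<gamma> \<ge> 0" using cb[of undefined] by simp
  define J where "J p = integral {0..1} (\<lambda>x. deriv f x * hat (s * x - a p))" for p
  have hJ: "((\<lambda>x. deriv f x * hat (s * x - a p)) has_integral J p) {0..1}" for p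
    unfolding J_def
    by (intro integrable_integral integrable_continuous_interval continuous_intros sp_deriv_cont[OF sp]
        continuous_on_compose2[OF hat_cont]) auto
  have "((\<lambda>x. \<Sum>p\<in>Iset. c p * (deriv f x * hat (s * x - a p))) has_integral (\<Sum>p\<in>Iset. c p * J p)) {0..1}"
    by (intro has_integral_sum finite_Iset has_integral_mult_right hJ)
  then have hP: "((\<lambda>x. deriv f x * ?P x) has_integral (\<Sum>p\<in>Iset. c p * J p)) {0..1}"
    by (rule has_integral_eq[rotated]) (simp add: Pfun_def sum_distrib_left mult_ac)
  have "((\<lambda>x. \<Sum>p\<in>Iset. c p * (f x * (s * hatd (s * x - a p)))) has_integral
          (\<Sum>p\<in>Iset. c p * (f 1 * hat (s - a p) - f 0 * hat (- a p) - J p))) {0..1}"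
    unfolding J_def by (intro has_integral_sum finite_Iset has_integral_mult_right atom_ibp[OF s sp])
  then have "((\<lambda>x. f x * ?D x) has_integral
          (\<Sum>p\<in>Iset. c p * (f 1 * hat (s - a p) - f 0 * hat (- a p) - J p))) {0..1}"
    by (rule has_integral_eq[rotated]) (simp add: Dfun_def sum_distrib_left mult_ac)
  moreover have "(\<Sum>p\<in>Iset. c p * (f 1 * hat (s - a p) - f 0 * hat (- a p) - J p)) = f 1 * ?P 1 - f 0 * ?P 0 - (\<Sum>p\<in>Iset. c p * J p)"
    by (simp add: Pfun_def sum_distrib_left sum_subtractf sum.distrib algebra_simps)
  ultimately have hD: "((\<lambda>x. f x * ?D x) has_integral
          (f 1 * ?P 1 - f 0 * ?P 0 - (\<Sum>p\<in>Iset. c p * J p))) {0..1}" by simp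
  have f01: "f 1 = f 0" using sp_per[OF sp, of 0] by simp
  have intD: "integral {0..1} (\<lambda>x. f x * ?D x) = - integral {0..1} (\<lambda>x. deriv f x * ?P x)"
    using integral_unique[OF hD] integral_unique[OF hP] f01 P01 by simp
  have Wm: "(\<lambda>x. complex_of_real (?D x) * EE 0 x) \<in> borel_measurable lborel"
    using Dfun_meas[of Iset c a s] by simp
  have Wb: "cmod (complex_of_real (?D x) * EE 0 x) \<le> 15 * (\<gamma> * s)" for x
    using Dfun_bound[OF cb s, where a=a and x=x] by simp
  have L2f: "L2 f" by (rule cont_L2[OF sp_cont[OF sp]])
  have int: "set_integrable lborel Dom (\<lambda>x. complex_of_real (f x) * (complex_of_real (?D x) * EE 0 x))"
    using kernel_integrable(1)[OF L2f Wm Wb] .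
  have "(LINT x:Dom|lborel. complex_of_real (f x) * (complex_of_real (?D x) * EE 0 x))
        = integral {0..1} (\<lambda>x. complex_of_real (f x) * (complex_of_real (?D x) * EE 0 x))"
    using set_borel_integral_eq_integral(2)[OF int] by (simp add: Dom_def integral_open_interval_real)
  also have "\<dots> = integral {0..1} (\<lambda>x. complex_of_real (f x * ?D x))" by simp
  also have "\<dots> = complex_of_real (integral {0..1} (\<lambda>x. f x * ?D x))"
    using integral_unique[OF has_integral_linear[OF hD bounded_linear_of_real]]
      integral_unique[OF hD] by (simp add: o_def)
  finally have eqL: "(LINT x:Dom|lborel. complex_of_real (f x) * (complex_of_real (?D x) * EE 0 x))
       = - complex_of_real (integral {0..1} (\<lambda>x. deriv f x * ?P x))" using intD by simp
  have L2f': "L2 (deriv f)" by (rule cont_L2[OF sp_deriv_cont[OF sp]])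
  have L2P: "L2 ?P" by (rule cont_L2) (intro continuous_intros)
  have "integral {0..1} (\<lambda>x. deriv f x * ?P x) = (LINT x:Dom|lborel. deriv f x * ?P x)"
    by (rule LINT_eq_HK[symmetric]) (intro continuous_intros sp_deriv_cont[OF sp])
  moreover have "norm (LINT x:Dom|lborel. deriv f x * ?P x) \<le> (LINT x:Dom|lborel. norm (deriv f x * ?P x))"
    by (rule set_integral_norm_bound, rule cont_set_integrable_Dom) (intro continuous_intros sp_deriv_cont[OF sp])
  ultimately have le1: "\<bar>integral {0..1} (\<lambda>x. deriv f x * ?P x)\<bar> \<le> (LINT x:Dom|lborel. \<bar>deriv f x * ?P x\<bar>)"
    by simp
  have "(cmod (LINT x:Dom|lborel. complex_of_real (f x) * (complex_of_real (?D x) * EE 0 x)))\<^sup>2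
        = (\<bar>integral {0..1} (\<lambda>x. deriv f x * ?P x)\<bar>)\<^sup>2" unfolding eqL by simp
  also have "\<dots> \<le> (LINT x:Dom|lborel. \<bar>deriv f x * ?P x\<bar>)\<^sup>2"
    using le1 by (intro power_mono) auto
  also have "\<dots> \<le> L2norm_sq (deriv f) * L2norm_sq ?P" by (rule CS_Dom(2)[OF L2f' L2P])
  finally show ?thesis .
qed

lemma ind_has_integral:
  fixes \<alpha> \<beta> :: real
  shows "((\<lambda>x. indicator {\<alpha><..<\<beta>} x :: real) has_integral integral {max \<alpha> 0..min \<beta> 1} (\<lambda>_. 1::real)) {0..1}"
proof -
  let ?u = "max \<alpha> 0" and ?v = "min \<beta> 1"
  have h1: "((\<lambda>_. 1::real) has_integral integral {?u..?v} (\<lambda>_. 1::real)) {?u..?v}"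
    by (rule integrable_integral) (rule Henstock_Kurzweil_Integration.integrable_const_ivl)
  have "negligible {\<alpha>, \<beta>}" by simp
  then have h2: "((\<lambda>_. 1::real) has_integral integral {?u..?v} (\<lambda>_. 1::real)) ({\<alpha><..<\<beta>} \<inter> {0..1})"
    by (rule has_integral_spike_set_eq[THEN iffD1, OF negligible_subset negligible_subset h1]) auto
  have "((\<lambda>x. if x \<in> {\<alpha><..<\<beta>} then 1::real else 0) has_integral integral {?u..?v} (\<lambda>_. 1::real)) {0..1}"
    using h2 by (subst has_integral_restrict_Int)
  then show ?thesis
    by (rule has_integral_eq[rotated]) (auto simp: indicator_def)
qed

lemma ind_integral_le:
  fixes \<alpha> \<beta> :: real
  assumes "\<alpha> \<le> \<beta>"
  shows "integral {0..1} (\<lambda>x. indicator {\<alpha><..<\<beta>} x :: real) \<le> \<beta> - \<alpha>"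
proof -
  have "integral {0..1} (\<lambda>x. indicator {\<alpha><..<\<beta>} x :: real) = integral {max \<alpha> 0..min \<beta> 1} (\<lambda>_. 1::real)"
    by (rule integral_unique[OF ind_has_integral])
  also have "\<dots> \<le> \<beta> - \<alpha>" using assms by (auto simp: content_real_if)
  finally show ?thesis .
qed

lemma hat_le_ind:
  assumes s: "s > 0"
  shows "hat (s * x - a) \<le> indicator {(a - 1) / s<..<(a + 1) / s} x"
proof (cases "x \<in> {(a - 1) / s<..<(a + 1) / s}")
  case True then show ?thesis using hat_bounds by simp
next
  case False
  then have "\<bar>s * x - a\<bar> \<ge> 1" using s by (auto simp: field_simps)
  then show ?thesis using False by (simp add: hat_zero)
qed

lemma Pfun_L2:
  assumes s: "s > 0" and cb: "\<And>p. \<bar>c p\<bar> \<le> \<gamma>"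
  shows "L2norm_sq (Pfun Iset c a s) \<le> 450 * \<gamma>\<^sup>2 / s"
proof -
  let ?P = "Pfun Iset c a s"
  let ?ind = "\<lambda>p x. indicator {(a p - 1) / s<..<(a p + 1) / s} x :: real"
  have \<gamma>: "\<gamma> \<ge> 0" using cb[of undefined] by simp
  have e: "L2norm_sq ?P = integral {0..1} (\<lambda>x. (?P x)\<^sup>2)"
    unfolding L2norm_sq_def by (rule LINT_eq_HK) (intro continuous_intros)
  have pw: "(?P x)\<^sup>2 \<le> 15 * \<gamma>\<^sup>2 * (\<Sum>p\<in>Iset. ?ind p x)" for x
  proof -
    have "\<bar>?P x\<bar> \<le> (\<Sum>p\<in>Iset. \<bar>c p * hat (s * x - a p)\<bar>)" unfolding Pfun_def by (rule sum_abs)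
    also have "\<dots> \<le> (\<Sum>p\<in>Iset. \<gamma> * ?ind p x)"
    proof (rule sum_mono)
      fix p
      have "\<bar>c p * hat (s * x - a p)\<bar> = \<bar>c p\<bar> * hat (s * x - a p)" using hat_bounds by (simp add: abs_mult)
      also have "\<dots> \<le> \<gamma> * ?ind p x" using cb[of p] hat_le_ind[OF s, of x "a p"] hat_bounds[of "s * x - a p"] \<gamma>
        by (intro mult_mono) auto
      finally show "\<bar>c p * hat (s * x - a p)\<bar> \<le> \<gamma> * ?ind p x" .
    qed
    finally have b1: "\<bar>?P x\<bar> \<le> \<gamma> * (\<Sum>p\<in>Iset. ?ind p x)" by (simp add: sum_distrib_left)
    have b2: "\<bar>?P x\<bar> \<le> 15 * \<gamma>" by (rule Pfun_bound[OF cb])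
    have "(?P x)\<^sup>2 = \<bar>?P x\<bar> * \<bar>?P x\<bar>" by (simp add: power2_eq_square)
    also have "\<dots> \<le> (15 * \<gamma>) * (\<gamma> * (\<Sum>p\<in>Iset. ?ind p x))"
      using b1 b2 by (intro mult_mono) auto
    also have "\<dots> = 15 * \<gamma>\<^sup>2 * (\<Sum>p\<in>Iset. ?ind p x)" by (simp add: power2_eq_square)
    finally show ?thesis .
  qed
  have hi: "((\<lambda>x. ?ind p x) has_integral integral {0..1} (\<lambda>x. ?ind p x)) {0..1}" for p
    using ind_has_integral by (rule integrable_integral[OF has_integral_integrable])
  have hs: "((\<lambda>x. 15 * \<gamma>\<^sup>2 * (\<Sum>p\<in>Iset. ?ind p x)) has_integral
        (15 * \<gamma>\<^sup>2 * (\<Sum>p\<in>Iset. integral {0..1} (\<lambda>x. ?ind p x)))) {0..1}"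
    by (intro has_integral_mult_right has_integral_sum finite_Iset hi)
  have "integral {0..1} (\<lambda>x. (?P x)\<^sup>2) \<le> 15 * \<gamma>\<^sup>2 * (\<Sum>p\<in>Iset. integral {0..1} (\<lambda>x. ?ind p x))"
    using pw by (intro has_integral_le[OF integrable_integral hs]) (auto intro!: integrable_continuous_interval continuous_intros)
  also have "\<dots> \<le> 15 * \<gamma>\<^sup>2 * (\<Sum>p\<in>Iset. 2 / s)"
  proof (intro mult_left_mono sum_mono)
    fix p
    have le: "(a p - 1) / s \<le> (a p + 1) / s" using s by (simp add: divide_right_mono)
    have "integral {0..1} (\<lambda>x. ?ind p x) \<le> (a p + 1) / s - (a p - 1) / s" by (rule ind_integral_le[OF le])
    also have "\<dots> = 2 / s" using s by (simp add: field_simps)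
    finally show "integral {0..1} (\<lambda>x. ?ind p x) \<le> 2 / s" .
  qed auto
  also have "\<dots> = 450 * \<gamma>\<^sup>2 / s" by (simp add: card_Iset)
  finally show ?thesis using e by simp
qed

definition cq :: "int \<Rightarrow> real" where "cq q = (1 + (2 * pi * real_of_int q)\<^sup>2) powr (-1/2)"
definition cc :: "int \<Rightarrow> complex" where "cc q = 2 * of_real pi * \<i> * of_int q"

lemma xihat_eq: "xihat q x = complex_of_real (cq q) * EE (cc q) x"
  by (simp add: xihat_def xi_def cq_def cc_def EE_def)

lemma xihat_vd: "vector_derivative (xihat q) (at x) = complex_of_real (cq q) * (cc q * EE (cc q) x)"
proof -
  have "(xihat q has_vector_derivative complex_of_real (cq q) * (cc q * EE (cc q) x)) (at x)"
    unfolding xihat_eq[abs_def] by (intro has_vector_derivative_mult_right EE_deriv)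
  then show ?thesis by (rule vector_derivative_at)
qed

lemma cnj_cc: "cnj (cc q) = - cc q" by (simp add: cc_def)
lemma Re_cc: "Re (cc q) = 0" by (simp add: cc_def)
lemma cnj_EE: "cnj (EE (cc q) x) = EE (- cc q) x"
proof -
  have "cnj (EE (cc q) x) = exp (cnj (cc q * complex_of_real x))" unfolding EE_def by (rule exp_cnj)
  then show ?thesis by (simp add: EE_def cnj_cc)
qed
lemma cc_0: "cc 0 = 0" by (simp add: cc_def)
lemma cq_0: "cq 0 = 1" by (simp add: cq_def)
lemma norm_cc: "cmod (cc q) = 2 * pi * \<bar>real_of_int q\<bar>"
  by (simp add: cc_def norm_mult)

lemma Pfun_deriv:
  assumes s: "s > 0" and x: "\<And>p. p \<in> I \<Longrightarrow> s * x - a p \<notin> {-1, 0, 1}"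
  shows "(Pfun I c a s has_real_derivative Dfun I c a s x) (at x)"
proof -
  have "((\<lambda>x. \<Sum>p\<in>I. c p * hat (s * x - a p)) has_real_derivative (\<Sum>p\<in>I. c p * (s * hatd (s * x - a p)))) (at x)"
  proof (rule DERIV_sum)
    fix p assume p: "p \<in> I"
    have "((\<lambda>x. hat (s * x - a p)) has_real_derivative hatd (s * x - a p) * s) (at x)"
    proof (rule DERIV_chain2[where g="\<lambda>x. s * x - a p"])
      show "(hat has_real_derivative hatd (s * x - a p)) (at (s * x - a p))" by (rule hat_deriv[OF x[OF p]])
      show "((\<lambda>x. s * x - a p) has_real_derivative s) (at x)" by (auto intro!: derivative_eq_intros)
    qed
    then show "((\<lambda>x. c p * hat (s * x - a p)) has_real_derivative c p * (s * hatd (s * x - a p))) (at x)"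
      by (rule DERIV_cmult[THEN DERIV_cong]) simp
  qed
  then show ?thesis unfolding Pfun_def[abs_def] Dfun_def .
qed

definition Kset :: "(int \<times> nat \<Rightarrow> real) \<Rightarrow> real \<Rightarrow> real set" where
  "Kset a s = (\<lambda>(p, e). (a p + e) / s) ` (Iset \<times> {-1, 0, 1})"

lemma finite_Kset: "finite (Kset a s)" by (simp add: Kset_def)

lemma psihat_vd:
  assumes rep: "\<forall>x\<in>Dom. g x = complex_of_real (Pfun Iset c a s x)" and s: "s > 0"
    and x: "x \<in> Dom" "x \<notin> Kset a s"
  shows "vector_derivative g (at x) = complex_of_real (Dfun Iset c a s x)"
proof -
  have nk: "s * x - a p \<notin> {-1, 0, 1}" if p: "p \<in> Iset" for p
  proof
    assume "s * x - a p \<in> {-1, 0, 1}"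
    then obtain e where e: "e \<in> {-1, 0, 1::real}" "s * x - a p = e" by blast
    then have "x = (a p + e) / s" using s by (auto simp: field_simps)
    then have "x \<in> Kset a s" unfolding Kset_def using p e(1) by force
    with x(2) show False by simp
  qed
  have "((\<lambda>y. complex_of_real (Pfun Iset c a s y)) has_vector_derivative complex_of_real (Dfun Iset c a s x)) (at x)"
    by (intro has_vector_derivative_of_real Pfun_deriv[OF s nk])
  then have "(g has_vector_derivative complex_of_real (Dfun Iset c a s x)) (at x)"
    by (rule has_vector_derivative_transform_within_open[where S=Dom]) (use x rep in \<open>auto simp: Dom_def\<close>)
  then show ?thesis by (rule vector_derivative_at)
qed

lemma Pfun_meas: "Pfun I c a s \<in> borel_measurable borel"
  by (intro borel_measurable_continuous_onI Pfun_cont)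

lemma aform_split:
  assumes rep: "\<forall>x\<in>Dom. psihat l0 j x = complex_of_real (Pfun Iset c a s x)" and s: "s > 0"
    and cb: "\<And>p. \<bar>c p\<bar> \<le> \<gamma>"
    and L2: "L2 \<eta>" "L2 \<beta>" "L2 \<rho>"
  shows "aform \<eta> \<beta> \<rho> (psihat l0 j) (xihat q) =
      complex_of_real (cq q) * cnj (cc q) * (LINT x:Dom|lborel. complex_of_real (\<eta> x) * (complex_of_real (Dfun Iset c a s x) * EE (- cc q) x))
    + complex_of_real (cq q) * (LINT x:Dom|lborel. complex_of_real (\<beta> x) * (complex_of_real (Dfun Iset c a s x) * EE (- cc q) x))
    + complex_of_real (cq q) * (LINT x:Dom|lborel. complex_of_real (\<rho> x) * (complex_of_real (Pfun Iset c a s x) * EE (- cc q) x))"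
proof -
  let ?K1 = "\<lambda>x. complex_of_real (Dfun Iset c a s x) * EE (- cc q) x"
  let ?K3 = "\<lambda>x. complex_of_real (Pfun Iset c a s x) * EE (- cc q) x"
  let ?F = "\<lambda>x. complex_of_real (\<eta> x) * vector_derivative (psihat l0 j) (at x) * cnj (vector_derivative (xihat q) (at x))
       + complex_of_real (\<beta> x) * vector_derivative (psihat l0 j) (at x) * cnj (xihat q x)
       + complex_of_real (\<rho> x) * psihat l0 j x * cnj (xihat q x)"
  let ?G = "\<lambda>x. complex_of_real (cq q) * cnj (cc q) * (complex_of_real (\<eta> x) * ?K1 x)
    + complex_of_real (cq q) * (complex_of_real (\<beta> x) * ?K1 x)
    + complex_of_real (cq q) * (complex_of_real (\<rho> x) * ?K3 x)"
  have \<gamma>: "\<gamma> \<ge> 0" using cb[of undefined] by simp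
  have FG: "?F x = ?G x" if x: "x \<in> Dom" "x \<notin> Kset a s" for x
  proof -
    have vd: "vector_derivative (psihat l0 j) (at x) = complex_of_real (Dfun Iset c a s x)"
      by (rule psihat_vd[OF rep s x])
    show ?thesis
      unfolding vd xihat_vd rep[rule_format, OF x(1)] xihat_eq
      by (simp add: cnj_EE cnj_cc algebra_simps)
  qed
  have "aform \<eta> \<beta> \<rho> (psihat l0 j) (xihat q) = (LINT x:Dom|lborel. ?G x)"
    unfolding aform_def set_lebesgue_integral_def
  proof (rule integral_discrete_difference[where X="Kset a s"])
    show "countable (Kset a s)" using finite_Kset by (rule countable_finite)
  next
    fix x assume "x \<in> space lborel" "x \<notin> Kset a s"
    then show "indicator Dom x *\<^sub>R ?F x = indicator Dom x *\<^sub>R ?G x"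
      using FG[of x] by (cases "x \<in> Dom") auto
  qed auto
  also have "\<dots> = complex_of_real (cq q) * cnj (cc q) * (LINT x:Dom|lborel. complex_of_real (\<eta> x) * ?K1 x)
    + complex_of_real (cq q) * (LINT x:Dom|lborel. complex_of_real (\<beta> x) * ?K1 x)
    + complex_of_real (cq q) * (LINT x:Dom|lborel. complex_of_real (\<rho> x) * ?K3 x)"
  proof -
    have m1: "?K1 \<in> borel_measurable lborel" using Dfun_meas[of Iset c a s] by (simp add: EE_def)
    have m3: "?K3 \<in> borel_measurable lborel" using Pfun_meas[of Iset c a s] by (simp add: EE_def)
    have b1: "cmod (?K1 x) \<le> 15 * (\<gamma> * s)" for x
      using Dfun_bound[OF cb s, where a=a and x=x] by (simp add: norm_mult norm_EE Re_cc)
    have b3: "cmod (?K3 x) \<le> 15 * \<gamma>" for x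
      using Pfun_bound[OF cb, where a=a and x=x and s=s] by (simp add: norm_mult norm_EE Re_cc)
    have i1: "set_integrable lborel Dom (\<lambda>x. complex_of_real (\<eta> x) * ?K1 x)"
      by (rule kernel_integrable(1)[OF L2(1) m1 b1])
    have i2: "set_integrable lborel Dom (\<lambda>x. complex_of_real (\<beta> x) * ?K1 x)"
      by (rule kernel_integrable(1)[OF L2(2) m1 b1])
    have i3: "set_integrable lborel Dom (\<lambda>x. complex_of_real (\<rho> x) * ?K3 x)"
      by (rule kernel_integrable(1)[OF L2(3) m3 b3])
    show ?thesis
      using i1 i2 i3 by (simp add: set_integral_add set_integral_mult_right set_integrable_mult_right)
  qed
  finally show ?thesis .
qed

lemma H1per_L2: "H1per u u' \<Longrightarrow> L2 u" "H1per u u' \<Longrightarrow> L2 u'"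
  by (auto simp: H1per_def)

lemma term1_bound:
  assumes H: "H1per \<eta> \<eta>'" and s: "s > 0" and cb: "\<And>p. \<bar>c p\<bar> \<le> \<gamma>" and q: "q \<noteq> 0"
  shows "(cmod (LINT x:Dom|lborel. complex_of_real (\<eta> x) * (complex_of_real (Dfun Iset c a s x) * EE (- cc q) x)))\<^sup>2
           \<le> 3600 * \<gamma>\<^sup>2 * H1norm_sq \<eta> \<eta>'"
    and "(cmod (LINT x:Dom|lborel. complex_of_real (\<eta> x) * (complex_of_real (Dfun Iset c a s x) * EE (- cc q) x)))\<^sup>2
           \<le> 23400 * \<gamma>\<^sup>2 * s\<^sup>2 / (cmod (cc q))\<^sup>2 * H1norm_sq \<eta> \<eta>'"
proof -
  let ?K1 = "\<lambda>x. complex_of_real (Dfun Iset c a s x) * EE (- cc q) x"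
  have \<gamma>: "\<gamma> \<ge> 0" using cb[of undefined] by simp
  have m1: "?K1 \<in> borel_measurable lborel" using Dfun_meas[of Iset c a s] by (simp add: EE_def)
  have b1: "\<And>x. x \<in> Dom \<Longrightarrow> cmod (?K1 x) \<le> 15 * (\<gamma> * s)"
    using Dfun_bound[OF cb s] by (simp add: norm_mult norm_EE Re_cc)
  have c0: "- cc q \<noteq> 0" "Re (- cc q) = 0" using q by (auto simp: cc_def Re_cc)
  have "(cmod (LINT x:Dom|lborel. complex_of_real (\<eta> x) * ?K1 x))\<^sup>2
        \<le> 2 * (1800 * \<gamma>\<^sup>2) * L2norm_sq \<eta> + 2 * (1800 * \<gamma>\<^sup>2) * L2norm_sq \<eta>'"
    by (rule H1_limit[OF H m1 b1]) (use smooth_E1_L2(1)[OF _ s cb c0] in \<open>auto simp: algebra_simps\<close>)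
  then show "(cmod (LINT x:Dom|lborel. complex_of_real (\<eta> x) * ?K1 x))\<^sup>2 \<le> 3600 * \<gamma>\<^sup>2 * H1norm_sq \<eta> \<eta>'"
    by (simp add: H1norm_sq_def algebra_simps)
  have "(cmod (LINT x:Dom|lborel. complex_of_real (\<eta> x) * ?K1 x))\<^sup>2
        \<le> 2 * (11700 * \<gamma>\<^sup>2 * s\<^sup>2 / (cmod (cc q))\<^sup>2) * L2norm_sq \<eta>
         + 2 * (11700 * \<gamma>\<^sup>2 * s\<^sup>2 / (cmod (cc q))\<^sup>2) * L2norm_sq \<eta>'"
  proof (rule H1_limit[OF H m1 b1])
    fix f assume f: "smooth_periodic f"
    have "(cmod (LINT x:Dom|lborel. complex_of_real (f x) * ?K1 x))\<^sup>2
        \<le> 11700 * \<gamma>\<^sup>2 * s\<^sup>2 * (L2norm_sq f + L2norm_sq (deriv f)) / (cmod (- cc q))\<^sup>2"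
      by (rule smooth_E1_L2(2)[OF f s cb c0])
    also have "\<dots> = (11700 * \<gamma>\<^sup>2 * s\<^sup>2 / (cmod (cc q))\<^sup>2) * L2norm_sq f + (11700 * \<gamma>\<^sup>2 * s\<^sup>2 / (cmod (cc q))\<^sup>2) * L2norm_sq (deriv f)"
      by (simp add: add_divide_distrib distrib_left)
    finally show "(cmod (LINT x:Dom|lborel. complex_of_real (f x) * ?K1 x))\<^sup>2
        \<le> (11700 * \<gamma>\<^sup>2 * s\<^sup>2 / (cmod (cc q))\<^sup>2) * L2norm_sq f + (11700 * \<gamma>\<^sup>2 * s\<^sup>2 / (cmod (cc q))\<^sup>2) * L2norm_sq (deriv f)" .
  qed simp_all
  also have "\<dots> = 23400 * \<gamma>\<^sup>2 * s\<^sup>2 / (cmod (cc q))\<^sup>2 * H1norm_sq \<eta> \<eta>'"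
    by (simp add: H1norm_sq_def distrib_left)
  finally show "(cmod (LINT x:Dom|lborel. complex_of_real (\<eta> x) * ?K1 x))\<^sup>2
           \<le> 23400 * \<gamma>\<^sup>2 * s\<^sup>2 / (cmod (cc q))\<^sup>2 * H1norm_sq \<eta> \<eta>'" .
qed

lemma term2_bound0:
  assumes H: "H1per \<beta> \<beta>'" and s: "s > 0" and cb: "\<And>p. \<bar>c p\<bar> \<le> \<gamma>"
    and P01: "Pfun Iset c a s 0 = Pfun Iset c a s 1"
  shows "(cmod (LINT x:Dom|lborel. complex_of_real (\<beta> x) * (complex_of_real (Dfun Iset c a s x) * EE (- cc 0) x)))\<^sup>2
           \<le> 900 * \<gamma>\<^sup>2 / s * H1semi_sq \<beta>'"
proof -
  let ?K1 = "\<lambda>x. complex_of_real (Dfun Iset c a s x) * EE 0 x"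
  have \<gamma>: "\<gamma> \<ge> 0" using cb[of undefined] by simp
  have m1: "?K1 \<in> borel_measurable lborel" using Dfun_meas[of Iset c a s] by simp
  have b1: "\<And>x. x \<in> Dom \<Longrightarrow> cmod (?K1 x) \<le> 15 * (\<gamma> * s)"
    using Dfun_bound[OF cb s] by simp
  have sm: "(cmod (LINT x:Dom|lborel. complex_of_real (f x) * ?K1 x))\<^sup>2 \<le> 0 * L2norm_sq f + 450 * \<gamma>\<^sup>2 / s * L2norm_sq (deriv f)"
    if f: "smooth_periodic f" for f
  proof -
    have "(cmod (LINT x:Dom|lborel. complex_of_real (f x) * ?K1 x))\<^sup>2 \<le> L2norm_sq (deriv f) * L2norm_sq (Pfun Iset c a s)"
      by (rule smooth_E2[OF f s cb P01])
    also have "\<dots> \<le> L2norm_sq (deriv f) * (450 * \<gamma>\<^sup>2 / s)"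
      by (intro mult_left_mono Pfun_L2[OF s cb] L2norm_sq_nonneg)
    finally show ?thesis by (simp add: algebra_simps)
  qed
  have "(cmod (LINT x:Dom|lborel. complex_of_real (\<beta> x) * ?K1 x))\<^sup>2
        \<le> 2 * 0 * L2norm_sq \<beta> + 2 * (450 * \<gamma>\<^sup>2 / s) * L2norm_sq \<beta>'"
    by (rule H1_limit[OF H m1 b1 _ _ sm]) (use s in auto)
  then show ?thesis by (simp add: H1semi_sq_def cc_0 algebra_simps)
qed

lemma term3_bound:
  assumes L2r: "L2 \<rho>" and s: "s > 0" and cb: "\<And>p. \<bar>c p\<bar> \<le> \<gamma>"
  shows "(cmod (LINT x:Dom|lborel. complex_of_real (\<rho> x) * (complex_of_real (Pfun Iset c a s x) * EE (- cc q) x)))\<^sup>2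
           \<le> 450 * \<gamma>\<^sup>2 / s * L2norm_sq \<rho>"
proof -
  let ?P = "Pfun Iset c a s"
  let ?K3 = "\<lambda>x. complex_of_real (?P x) * EE (- cc q) x"
  have m3: "?K3 \<in> borel_measurable lborel" using Pfun_meas[of Iset c a s] by (simp add: EE_def)
  have b3: "\<And>x. x \<in> Dom \<Longrightarrow> cmod (?K3 x) \<le> 15 * \<gamma>"
    using Pfun_bound[OF cb] by (simp add: norm_mult norm_EE Re_cc)
  have L2P: "L2 ?P" by (rule cont_L2) (intro continuous_intros)
  have i: "set_integrable lborel Dom (\<lambda>x. complex_of_real (\<rho> x) * ?K3 x)"
    by (rule kernel_integrable(1)[OF L2r m3 b3])
  have "cmod (LINT x:Dom|lborel. complex_of_real (\<rho> x) * ?K3 x) \<le> (LINT x:Dom|lborel. cmod (complex_of_real (\<rho> x) * ?K3 x))"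
    by (rule set_integral_norm_bound[OF i])
  also have "\<dots> = (LINT x:Dom|lborel. \<bar>\<rho> x * ?P x\<bar>)"
    by (simp add: norm_mult norm_EE Re_cc abs_mult)
  finally have le: "cmod (LINT x:Dom|lborel. complex_of_real (\<rho> x) * ?K3 x) \<le> (LINT x:Dom|lborel. \<bar>\<rho> x * ?P x\<bar>)" .
  have "(cmod (LINT x:Dom|lborel. complex_of_real (\<rho> x) * ?K3 x))\<^sup>2 \<le> (LINT x:Dom|lborel. \<bar>\<rho> x * ?P x\<bar>)\<^sup>2"
    using le by (intro power_mono) auto
  also have "\<dots> \<le> L2norm_sq \<rho> * L2norm_sq ?P" by (rule CS_Dom(2)[OF L2r L2P])
  also have "\<dots> \<le> L2norm_sq \<rho> * (450 * \<gamma>\<^sup>2 / s)"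
    by (intro mult_left_mono Pfun_L2[OF s cb] L2norm_sq_nonneg)
  finally show ?thesis by (simp add: algebra_simps)
qed

lemma sq_powr_half:
  fixes A b :: real
  assumes "A > 0"
  shows "(A powr (- b / 2))\<^sup>2 = inverse (A powr b)"
proof -
  have "(A powr (- b / 2))\<^sup>2 = A powr (- b / 2) * A powr (- b / 2)" by (simp only: power2_eq_square)
  also have "\<dots> = A powr (- b / 2 + - b / 2)" by (simp only: powr_add)
  also have "- b / 2 + - b / 2 = - b" by simp
  also have "A powr (- b) = inverse (A powr b)" by (rule powr_minus)
  finally show ?thesis .
qed

lemma gamma_sq: "(2 * 2 powr (- (real l / 2)))\<^sup>2 = 8 / (2::real) ^ (l + 1)"
proof -
  have "(2 powr (- (real l / 2)))\<^sup>2 = (2 powr (- real l / 2))\<^sup>2" by simp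
  also have "\<dots> = inverse (2 powr real l)" by (rule sq_powr_half) simp
  also have "\<dots> = inverse ((2::real) ^ l)" by (simp add: powr_realpow)
  finally have "(2 powr (- (real l / 2)))\<^sup>2 = inverse ((2::real) ^ l)" .
  moreover have "(2 * X)\<^sup>2 = 8 / (2::real) ^ (l + 1)" if "X\<^sup>2 = inverse ((2::real) ^ l)" for X :: real
  proof -
    have "(2 * X)\<^sup>2 = 4 * X\<^sup>2" by (simp add: power2_eq_square)
    also have "\<dots> = 4 * inverse ((2::real) ^ l)" using that by simp
    also have "\<dots> = 8 / (2::real) ^ (l + 1)" by (simp add: field_simps)
    finally show ?thesis .
  qed
  ultimately show ?thesis by blast
qed

lemma sum3_sq: "(cmod (x + y + z))\<^sup>2 \<le> 3 * ((cmod x)\<^sup>2 + (cmod y)\<^sup>2 + (cmod z)\<^sup>2)"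
proof -
  have "cmod (x + y + z) \<le> cmod x + cmod y + cmod z"
    using norm_triangle_ineq[of "x + y" z] norm_triangle_ineq[of x y] by linarith
  then have "(cmod (x + y + z))\<^sup>2 \<le> (cmod x + cmod y + cmod z)\<^sup>2" by (intro power_mono) auto
  also have "\<dots> \<le> 3 * ((cmod x)\<^sup>2 + (cmod y)\<^sup>2 + (cmod z)\<^sup>2)"
  proof -
    have "0 \<le> (cmod x - cmod y)\<^sup>2 + (cmod y - cmod z)\<^sup>2 + (cmod x - cmod z)\<^sup>2" by simp
    then show ?thesis by (simp add: power2_eq_square algebra_simps)
  qed
  finally show ?thesis .
qed

lemma cq_sq: "(cq q)\<^sup>2 = 1 / (1 + (2 * pi * real_of_int q)\<^sup>2)"
proof -
  have pos: "1 + (2 * pi * real_of_int q)\<^sup>2 > 0" by (simp add: add_pos_nonneg)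
  have "(cq q)\<^sup>2 = inverse ((1 + (2 * pi * real_of_int q)\<^sup>2) powr 1)"
    unfolding cq_def using sq_powr_half[OF pos, of 1] by simp
  also have "\<dots> = 1 / (1 + (2 * pi * real_of_int q)\<^sup>2)" using pos by (simp add: divide_inverse)
  finally show ?thesis .
qed

lemma cq_cc_le: "(cq q)\<^sup>2 * (cmod (cc q))\<^sup>2 \<le> 1"
proof -
  have t: "(2 * pi * \<bar>real_of_int q\<bar>)\<^sup>2 = (2 * pi * real_of_int q)\<^sup>2" by (simp add: power_mult_distrib)
  have aux: "1 / (1 + x) * x \<le> 1" if "x \<ge> 0" for x :: real
    using that by (simp add: divide_le_eq)
  show ?thesis unfolding cq_sq norm_cc t by (rule aux) simp
qed

lemma cq_le: "q \<noteq> 0 \<Longrightarrow> (cq q)\<^sup>2 \<le> 1 / (real_of_int q)\<^sup>2"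
proof -
  assume q: "q \<noteq> 0"
  have "(real_of_int q)\<^sup>2 \<le> 1 + (2 * pi * real_of_int q)\<^sup>2"
  proof -
    have p: "1 \<le> (2 * pi)\<^sup>2"
    proof -
      have "1 \<le> 2 * pi" using pi_gt3 by simp
      then have "1 * 1 \<le> (2 * pi) * (2 * pi)" by (intro mult_mono) auto
      then show ?thesis by (simp add: power2_eq_square)
    qed
    have "(real_of_int q)\<^sup>2 = 1 * (real_of_int q)\<^sup>2" by simp
    also have "\<dots> \<le> (2 * pi)\<^sup>2 * (real_of_int q)\<^sup>2" by (rule mult_right_mono[OF p]) simp
    also have "\<dots> = (2 * pi * real_of_int q)\<^sup>2" by (simp only: power_mult_distrib)
    finally show ?thesis by simp
  qed
  moreover have "0 < (1 + (2 * pi * real_of_int q)\<^sup>2) * (real_of_int q)\<^sup>2"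
    using q by (intro mult_pos_pos add_pos_nonneg) auto
  ultimately show ?thesis unfolding cq_sq by (intro divide_left_mono) auto
qed

lemma min_lemma:
  fixes X H s :: real and q :: int
  assumes X1: "X \<le> 28800 * H / s" and X2: "X \<le> 5200 * s * H / (real_of_int q)\<^sup>2"
    and s: "0 < s" "s \<le> 2 ^ L" and q: "q \<noteq> 0" and H: "H \<ge> 0"
  shows "X \<le> 14400 * H * min (2 ^ L / (real_of_int q)\<^sup>2) (1 / \<bar>real_of_int q\<bar>)"
proof -
  let ?q = "\<bar>real_of_int q\<bar>"
  have qp: "?q > 0" using q by simp
  have q2: "(real_of_int q)\<^sup>2 = ?q * ?q" by (simp add: power2_eq_square)
  have A: "X \<le> 14400 * H * (2 ^ L / (real_of_int q)\<^sup>2)"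
  proof -
    have "5200 * s * H \<le> 14400 * 2 ^ L * H"
      using s H by (intro mult_right_mono mult_mono) auto
    then have "5200 * s * H / (real_of_int q)\<^sup>2 \<le> 14400 * 2 ^ L * H / (real_of_int q)\<^sup>2"
      by (intro divide_right_mono) auto
    also have "\<dots> = 14400 * H * (2 ^ L / (real_of_int q)\<^sup>2)" by simp
    finally have "5200 * s * H / (real_of_int q)\<^sup>2 \<le> 14400 * H * (2 ^ L / (real_of_int q)\<^sup>2)" .
    then show ?thesis using X2 by linarith
  qed
  have B: "X \<le> 14400 * H * (1 / ?q)"
  proof (cases "s \<ge> 2 * ?q")
    case True
    have "28800 * H / s \<le> 28800 * H / (2 * ?q)" using True qp H by (intro divide_left_mono) auto
    then show ?thesis using X1 by simp
  next
    case False
    have "5200 * s * H / (real_of_int q)\<^sup>2 \<le> 5200 * (2 * ?q) * H / (?q * ?q)"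
      using False H qp s unfolding q2 by (intro divide_right_mono mult_right_mono) auto
    also have "\<dots> = 10400 * H / ?q" using qp by (simp add: field_simps)
    also have "\<dots> \<le> 14400 * H * (1 / ?q)" using qp H by (simp add: divide_right_mono)
    finally show ?thesis using X2 by linarith
  qed
  show ?thesis using A B by (simp add: min_def)
qed

lemma alg_aux:
  fixes s g H p :: real and q :: int
  assumes g: "g = 8 / s" and s: "s > 0" and q: "q \<noteq> 0" and p: "p > 0"
  shows "23400 * g * s\<^sup>2 / (2 * p * \<bar>real_of_int q\<bar>)\<^sup>2 * H = 46800 * s * H / (p\<^sup>2 * (real_of_int q)\<^sup>2)"
  using s q p unfolding g by (simp add: field_simps power_mult_distrib power2_eq_square)

lemma I_bound:
  fixes X H s g :: real and q :: int
  assumes X1: "X \<le> 3600 * g * H" and X2: "X \<le> 23400 * g * s\<^sup>2 / (cmod (cc q))\<^sup>2 * H"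
    and g: "g = 8 / s" and s: "0 < s" "s \<le> 2 ^ L" and q: "q \<noteq> 0" and H: "H \<ge> 0"
  shows "X \<le> 14400 * H * min (2 ^ L / (real_of_int q)\<^sup>2) (1 / \<bar>real_of_int q\<bar>)"
proof (rule min_lemma[OF _ _ s q H])
  show "X \<le> 28800 * H / s" using X1 unfolding g by simp
  have "23400 * g * s\<^sup>2 / (cmod (cc q))\<^sup>2 * H = 46800 * s * H / (pi\<^sup>2 * (real_of_int q)\<^sup>2)"
    unfolding norm_cc by (rule alg_aux[OF g s(1) q pi_gt_zero])
  also have "\<dots> \<le> 46800 * s * H / (9 * (real_of_int q)\<^sup>2)"
  proof (rule divide_left_mono)
    have "3 * 3 \<le> pi * pi" using pi_gt3 by (intro mult_mono) auto
    then have "9 \<le> pi\<^sup>2" by (simp add: power2_eq_square)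
    then show "9 * (real_of_int q)\<^sup>2 \<le> pi\<^sup>2 * (real_of_int q)\<^sup>2" by (intro mult_right_mono) auto
    show "0 \<le> 46800 * s * H" using s H by simp
    show "0 < pi\<^sup>2 * (real_of_int q)\<^sup>2 * (9 * (real_of_int q)\<^sup>2)" using q by simp
  qed
  also have "\<dots> = 5200 * s * H / (real_of_int q)\<^sup>2" by simp
  finally show "X \<le> 5200 * s * H / (real_of_int q)\<^sup>2" using X2 by linarith
qed

lemma j_facts:
  assumes j: "j \<in> J l0 L" and l0: "l0 \<ge> 2" and L: "L > l0"
  shows "fst j < L" "fst j + 1 \<ge> l0" "(2::real) ^ (fst j + 1) \<le> 2 ^ L"
proof -
  from j show jl: "fst j < L" "fst j + 1 \<ge> l0" unfolding J_def using l0 L by auto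
  show "(2::real) ^ (fst j + 1) \<le> 2 ^ L" using jl by (intro power_increasing) auto
qed

lemma per_j_q:
  assumes l0: "l0 \<ge> 2" and j: "j \<in> J l0 L" and L: "L > l0"
    and He: "H1per \<eta> \<eta>'" and Hb: "H1per \<beta> \<beta>'" and Lr: "L2 \<rho>" and q: "q \<noteq> 0"
  shows "(cmod (aform \<eta> \<beta> \<rho> (psihat l0 j) (xihat q)))\<^sup>2
     \<le> 43200 * (H1norm_sq \<eta> \<eta>' + H1norm_sq \<beta> \<beta>' / (real_of_int q)\<^sup>2 + L2norm_sq \<rho>)
         * min (2 ^ L / (real_of_int q)\<^sup>2) (1 / \<bar>real_of_int q\<bar>)"
proof -
  let ?s = "(2::real) ^ (fst j + 1)"
  let ?g = "2 * 2 powr (- (real (fst j) / 2))"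
  let ?M = "min (2 ^ L / (real_of_int q)\<^sup>2) (1 / \<bar>real_of_int q\<bar>)"
  obtain c a where rep: "\<forall>x\<in>Dom. psihat l0 j x = complex_of_real (Pfun Iset c a ?s x)"
    and cb: "\<And>p. \<bar>c p\<bar> \<le> ?g"
    using psihat_rep[OF j l0] by blast
  have s: "?s > 0" by simp
  have sL: "?s \<le> 2 ^ L" by (rule j_facts(3)[OF j l0 L])
  have g2: "?g\<^sup>2 = 8 / ?s" by (rule gamma_sq)
  have s1: "?s \<ge> 1" by (rule one_le_power) simp
  have He2: "L2 \<eta>" and Hb2: "L2 \<beta>" using He Hb by (auto simp: H1per_def)
  define I1 where "I1 = (LINT x:Dom|lborel. complex_of_real (\<eta> x) * (complex_of_real (Dfun Iset c a ?s x) * EE (- cc q) x))"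
  define I2 where "I2 = (LINT x:Dom|lborel. complex_of_real (\<beta> x) * (complex_of_real (Dfun Iset c a ?s x) * EE (- cc q) x))"
  define I3 where "I3 = (LINT x:Dom|lborel. complex_of_real (\<rho> x) * (complex_of_real (Pfun Iset c a ?s x) * EE (- cc q) x))"
  have split: "aform \<eta> \<beta> \<rho> (psihat l0 j) (xihat q) =
      complex_of_real (cq q) * cnj (cc q) * I1 + complex_of_real (cq q) * I2 + complex_of_real (cq q) * I3"
    unfolding I1_def I2_def I3_def by (rule aform_split[OF rep s cb He2 Hb2 Lr])
  have Hen: "H1norm_sq \<eta> \<eta>' \<ge> 0" "H1norm_sq \<beta> \<beta>' \<ge> 0"
    by (auto simp: H1norm_sq_def intro!: add_nonneg_nonneg L2norm_sq_nonneg)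
  have Lrn: "L2norm_sq \<rho> \<ge> 0" by (rule L2norm_sq_nonneg)
  have M1: "1 / (real_of_int q)\<^sup>2 \<le> ?M"
  proof -
    have q1: "\<bar>real_of_int q\<bar> \<ge> 1" using q by linarith
    have "1 / (real_of_int q)\<^sup>2 \<le> 2 ^ L / (real_of_int q)\<^sup>2" using q by (intro divide_right_mono) auto
    moreover have "1 / (real_of_int q)\<^sup>2 \<le> 1 / \<bar>real_of_int q\<bar>"
    proof -
      have "\<bar>real_of_int q\<bar> * 1 \<le> \<bar>real_of_int q\<bar> * \<bar>real_of_int q\<bar>"
        by (rule mult_left_mono[OF q1]) simp
      moreover have "(real_of_int q)\<^sup>2 = \<bar>real_of_int q\<bar> * \<bar>real_of_int q\<bar>" by (simp add: power2_eq_square)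
      ultimately have "\<bar>real_of_int q\<bar> \<le> (real_of_int q)\<^sup>2" by simp
      then show ?thesis using q1 by (intro divide_left_mono) auto
    qed
    ultimately show ?thesis by simp
  qed
  have B1: "(cmod I1)\<^sup>2 \<le> 14400 * H1norm_sq \<eta> \<eta>' * ?M"
    unfolding I1_def by (rule I_bound[OF term1_bound(1)[OF He s cb q] term1_bound(2)[OF He s cb q] g2 s sL q Hen(1)])
  have B2: "(cmod I2)\<^sup>2 \<le> 14400 * H1norm_sq \<beta> \<beta>' * ?M"
    unfolding I2_def by (rule I_bound[OF term1_bound(1)[OF Hb s cb q] term1_bound(2)[OF Hb s cb q] g2 s sL q Hen(2)])
  have B3: "(cmod I3)\<^sup>2 \<le> 3600 * L2norm_sq \<rho>"
  proof -
    have "(cmod I3)\<^sup>2 \<le> 450 * ?g\<^sup>2 / ?s * L2norm_sq \<rho>" unfolding I3_def by (rule term3_bound[OF Lr s cb])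
    also have "\<dots> = 3600 / (?s * ?s) * L2norm_sq \<rho>" unfolding g2 by simp
    also have "\<dots> \<le> 3600 / 1 * L2norm_sq \<rho>"
    proof (intro mult_right_mono divide_left_mono Lrn)
      show "1 \<le> ?s * ?s" using mult_mono[OF s1 s1] by simp
      show "0 < ?s * ?s * 1" by simp
    qed simp
    finally show ?thesis by simp
  qed
  have cq2: "(cq q)\<^sup>2 \<le> 1 / (real_of_int q)\<^sup>2" by (rule cq_le[OF q])
  have A1: "(cmod (complex_of_real (cq q) * cnj (cc q) * I1))\<^sup>2 \<le> 14400 * H1norm_sq \<eta> \<eta>' * ?M"
  proof -
    have "(cmod (complex_of_real (cq q) * cnj (cc q) * I1))\<^sup>2 = ((cq q)\<^sup>2 * (cmod (cc q))\<^sup>2) * (cmod I1)\<^sup>2"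
      by (simp add: norm_mult power_mult_distrib)
    also have "\<dots> \<le> 1 * (cmod I1)\<^sup>2" by (intro mult_right_mono cq_cc_le) auto
    also have "\<dots> \<le> 14400 * H1norm_sq \<eta> \<eta>' * ?M" using B1 by simp
    finally show ?thesis .
  qed
  have A2: "(cmod (complex_of_real (cq q) * I2))\<^sup>2 \<le> 14400 * (H1norm_sq \<beta> \<beta>' / (real_of_int q)\<^sup>2) * ?M"
  proof -
    have "(cmod (complex_of_real (cq q) * I2))\<^sup>2 = (cq q)\<^sup>2 * (cmod I2)\<^sup>2"
      by (simp add: norm_mult power_mult_distrib)
    also have "\<dots> \<le> (1 / (real_of_int q)\<^sup>2) * (14400 * H1norm_sq \<beta> \<beta>' * ?M)"
      using cq2 B2 by (intro mult_mono) auto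
    also have "\<dots> = 14400 * (H1norm_sq \<beta> \<beta>' / (real_of_int q)\<^sup>2) * ?M" by simp
    finally show ?thesis .
  qed
  have A3: "(cmod (complex_of_real (cq q) * I3))\<^sup>2 \<le> 14400 * L2norm_sq \<rho> * ?M"
  proof -
    have "(cmod (complex_of_real (cq q) * I3))\<^sup>2 = (cq q)\<^sup>2 * (cmod I3)\<^sup>2"
      by (simp add: norm_mult power_mult_distrib)
    also have "\<dots> \<le> (1 / (real_of_int q)\<^sup>2) * (3600 * L2norm_sq \<rho>)"
      using cq2 B3 by (intro mult_mono) auto
    also have "\<dots> \<le> ?M * (14400 * L2norm_sq \<rho>)"
      using M1 Lrn by (intro mult_mono) auto
    finally show ?thesis by (simp add: algebra_simps)
  qed
  have "(cmod (aform \<eta> \<beta> \<rho> (psihat l0 j) (xihat q)))\<^sup>2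
      \<le> 3 * ((cmod (complex_of_real (cq q) * cnj (cc q) * I1))\<^sup>2 + (cmod (complex_of_real (cq q) * I2))\<^sup>2
             + (cmod (complex_of_real (cq q) * I3))\<^sup>2)"
    unfolding split by (rule sum3_sq)
  also have "\<dots> \<le> 3 * (14400 * H1norm_sq \<eta> \<eta>' * ?M + 14400 * (H1norm_sq \<beta> \<beta>' / (real_of_int q)\<^sup>2) * ?M
             + 14400 * L2norm_sq \<rho> * ?M)"
    using A1 A2 A3 by simp
  also have "\<dots> = 43200 * (H1norm_sq \<eta> \<eta>' + H1norm_sq \<beta> \<beta>' / (real_of_int q)\<^sup>2 + L2norm_sq \<rho>) * ?M"
    by (simp add: algebra_simps)
  finally show ?thesis .
qed

lemma per_j_0:
  assumes l0: "l0 \<ge> 2" and j: "j \<in> J l0 L" and L: "L > l0"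
    and Hb: "H1per \<beta> \<beta>'" and Lr: "L2 \<rho>" and Le: "L2 \<eta>"
  shows "(cmod (aform \<eta> \<beta> \<rho> (psihat l0 j) (xihat 0)))\<^sup>2
     \<le> 43200 * 2 powr (- 2 * real l0) * (H1semi_sq \<beta>' + L2norm_sq \<rho>)"
proof -
  let ?s = "(2::real) ^ (fst j + 1)"
  let ?g = "2 * 2 powr (- (real (fst j) / 2))"
  obtain c a where rep: "\<forall>x\<in>Dom. psihat l0 j x = complex_of_real (Pfun Iset c a ?s x)"
    and cb: "\<And>p. \<bar>c p\<bar> \<le> ?g"
    and P01: "Pfun Iset c a ?s 0 = Pfun Iset c a ?s 1"
    using psihat_rep[OF j l0] by blast
  have s: "?s > 0" by simp
  have g2: "?g\<^sup>2 = 8 / ?s" by (rule gamma_sq)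
  have Hb2: "L2 \<beta>" using Hb by (auto simp: H1per_def)
  define I2 where "I2 = (LINT x:Dom|lborel. complex_of_real (\<beta> x) * (complex_of_real (Dfun Iset c a ?s x) * EE (- cc 0) x))"
  define I3 where "I3 = (LINT x:Dom|lborel. complex_of_real (\<rho> x) * (complex_of_real (Pfun Iset c a ?s x) * EE (- cc 0) x))"
  have split: "aform \<eta> \<beta> \<rho> (psihat l0 j) (xihat 0) = 0 + I2 + I3"
    using aform_split[OF rep s cb Le Hb2 Lr, of 0] unfolding I2_def I3_def by (simp add: cc_0 cq_0)
  have semi: "H1semi_sq \<beta>' \<ge> 0" by (simp add: H1semi_sq_def L2norm_sq_nonneg)
  have Lrn: "L2norm_sq \<rho> \<ge> 0" by (rule L2norm_sq_nonneg)
  have ss: "1 / (?s * ?s) \<le> 2 powr (- 2 * real l0)"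
  proof -
    have "(2::real) ^ l0 \<le> ?s" using j_facts(2)[OF j l0 L] by (intro power_increasing) auto
    then have "(2::real) ^ l0 * 2 ^ l0 \<le> ?s * ?s" by (intro mult_mono) auto
    then have "1 / (?s * ?s) \<le> 1 / ((2::real) ^ l0 * 2 ^ l0)" by (intro divide_left_mono) auto
    also have "\<dots> = 2 powr (- 2 * real l0)"
    proof -
      have "(2::real) ^ l0 * 2 ^ l0 = 2 powr (2 * real l0)"
        by (simp add: powr_realpow[symmetric] powr_add[symmetric])
      then show ?thesis by (simp add: powr_minus divide_inverse)
    qed
    finally show ?thesis .
  qed
  have B2: "(cmod I2)\<^sup>2 \<le> 7200 / (?s * ?s) * H1semi_sq \<beta>'"
  proof -
    have "(cmod I2)\<^sup>2 \<le> 900 * ?g\<^sup>2 / ?s * H1semi_sq \<beta>'" unfolding I2_def by (rule term2_bound0[OF Hb s cb P01])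
    also have "\<dots> = 7200 / (?s * ?s) * H1semi_sq \<beta>'" unfolding g2 by simp
    finally show ?thesis .
  qed
  have B3: "(cmod I3)\<^sup>2 \<le> 3600 / (?s * ?s) * L2norm_sq \<rho>"
  proof -
    have "(cmod I3)\<^sup>2 \<le> 450 * ?g\<^sup>2 / ?s * L2norm_sq \<rho>" unfolding I3_def by (rule term3_bound[OF Lr s cb])
    also have "\<dots> = 3600 / (?s * ?s) * L2norm_sq \<rho>" unfolding g2 by simp
    finally show ?thesis .
  qed
  have "(cmod (aform \<eta> \<beta> \<rho> (psihat l0 j) (xihat 0)))\<^sup>2 \<le> 3 * ((cmod 0)\<^sup>2 + (cmod I2)\<^sup>2 + (cmod I3)\<^sup>2)"
    unfolding split by (rule sum3_sq)
  also have "\<dots> \<le> 3 * (7200 / (?s * ?s) * H1semi_sq \<beta>' + 7200 / (?s * ?s) * L2norm_sq \<rho>)"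
  proof -
    have "3600 / (?s * ?s) * L2norm_sq \<rho> \<le> 7200 / (?s * ?s) * L2norm_sq \<rho>"
      using Lrn by (intro mult_right_mono divide_right_mono) auto
    then show ?thesis using B2 B3 by simp
  qed
  also have "\<dots> = 21600 * (1 / (?s * ?s)) * (H1semi_sq \<beta>' + L2norm_sq \<rho>)" by (simp add: algebra_simps add_divide_distrib)
  also have "\<dots> \<le> 21600 * 2 powr (- 2 * real l0) * (H1semi_sq \<beta>' + L2norm_sq \<rho>)"
    using ss semi Lrn by (intro mult_right_mono mult_left_mono) auto
  also have "\<dots> \<le> 43200 * 2 powr (- 2 * real l0) * (H1semi_sq \<beta>' + L2norm_sq \<rho>)"
    using semi Lrn by (intro mult_right_mono) auto
  finally show ?thesis .
qed

lemma J_ne: "J l0 L \<noteq> {}"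
  unfolding J_def by auto

theorem theorem4p2:
  fixes l0 :: nat
  assumes "l0 \<ge> 2"
  shows "\<exists>C>0. \<forall>(L::nat) \<eta> \<eta>' \<beta> \<beta>' \<rho>.
     L > l0 \<longrightarrow> H1per \<eta> \<eta>' \<longrightarrow> H1per \<beta> \<beta>' \<longrightarrow> L2 \<rho> \<longrightarrow>
       coherence l0 L \<eta> \<beta> \<rho> 0
          \<le> C * 2 powr (- 2 * real l0) * (H1semi_sq \<beta>' + L2norm_sq \<rho>)
     \<and> (\<forall>q::int. q \<noteq> 0 \<longrightarrow>
          coherence l0 L \<eta> \<beta> \<rho> q
            \<le> C * (H1norm_sq \<eta> \<eta>' + H1norm_sq \<beta> \<beta>' / (real_of_int q)\<^sup>2 + L2norm_sq \<rho>)
                * min (2 ^ L / (real_of_int q)\<^sup>2) (1 / \<bar>real_of_int q\<bar>))"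
proof (intro exI[of _ "43200"] conjI allI impI)
  show "(0::real) < 43200" by simp
  fix L :: nat and \<eta> \<eta>' \<beta> \<beta>' \<rho> :: "real \<Rightarrow> real"
  assume L: "L > l0" and He: "H1per \<eta> \<eta>'" and Hb: "H1per \<beta> \<beta>'" and Lr: "L2 \<rho>"
  have Le: "L2 \<eta>" using He by (simp add: H1per_def)
  show "coherence l0 L \<eta> \<beta> \<rho> 0 \<le> 43200 * 2 powr (- 2 * real l0) * (H1semi_sq \<beta>' + L2norm_sq \<rho>)"
    unfolding coherence_def
    by (rule cSUP_least[OF J_ne]) (rule per_j_0[OF assms _ L Hb Lr Le])
  fix q :: int assume q: "q \<noteq> 0"
  show "coherence l0 L \<eta> \<beta> \<rho> q
            \<le> 43200 * (H1norm_sq \<eta> \<eta>' + H1norm_sq \<beta> \<beta>' / (real_of_int q)\<^sup>2 + L2norm_sq \<rho>)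
                * min (2 ^ L / (real_of_int q)\<^sup>2) (1 / \<bar>real_of_int q\<bar>)"
    unfolding coherence_def
    by (rule cSUP_least[OF J_ne]) (rule per_j_q[OF assms _ L He Hb Lr q])
qed

end
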